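(* Let $0\ne f\in F(\mathfrak B)$ belong to an irreducible $GL$-submodule isomorphic to $W(\lambda_1,\lambda_2)$. Then for every partition $\mu=(\mu_1,\mu_2)$ with $\mu_2\ge\lambda_1$ and every admissible $j$ (i.e. $0\le j\le\mu_1-\mu_2$), the identity $w^{(j)}_\mu=0$ is a consequence of $f=0$, i.e. $w^{(j)}_\mu$ lies in the T-ideal of $F(\mathfrak B)$ generated by $f$. In particular $(y_1z_2-y_2z_1)^{\lambda_1}$ lies in this T-ideal.
   Context: $K$ is a field of characteristic $0$. $\mathfrak B$ is the variety of bicommutative algebras (identities $(x_1x_2)x_3=(x_1x_3)x_2$, $x_1(x_2x_3)=x_2(x_1x_3)$), with free algebra $F(\mathfrak B)$ on $x_1,x_2,\dots$; a T-ideal is a two-sided ideal closed under all algebra endomorphisms. The general linear groups act on $F_d(\mathfrak B)$ by extending the natural linear action on $\mathrm{span}(x_1,\dots,x_d)$ to automorphisms; $W(\lambda)$ is the irreducible polynomial module indexed by the partition $\lambda$. Model: with $K[Y,Z]$ the commutative polynomial ring in $y_1,y_2,\dots,z_1,z_2,\dots$, the algebra $G$ has basis $\{x_i\}\cup\{Y^\alpha Z^\beta:|\alpha|,|\beta|>0\}$ and multiplication $x_ix_j=y_iz_j$, $x_i\cdot(Y^\alpha Z^\beta)=y_iY^\alpha Z^\beta$, $(Y^\alpha Z^\beta)\cdot x_j=Y^\alpha Z^\beta z_j$, $(Y^\alpha Z^\beta)(Y^\gamma Z^\delta)=Y^{\alpha+\gamma}Z^{\beta+\delta}$; it is known that $x_i\mapsto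 x_i$ gives an isomorphism $F(\mathfrak B)\cong G$, so elements of $F(\mathfrak B)^2$ are written as polynomials in the $y_i,z_i$ (positive degree in both sets). For $\mu=(\mu_1,\mu_2)$ with $\mu_2>0$, $w^{(j)}_\mu=y_1^j(y_1z_2-y_2z_1)^{\mu_2}z_1^{\mu_1-\mu_2-j}$, $0\le j\le\mu_1-\mu_2$. *)

theory Defs
  imports "HOL-Library.Poly_Mapping"
begin

datatype var = Yv nat | Zv nat

type_synonym 'k pol = "(var \<Rightarrow>\<^sub>0 nat) \<Rightarrow>\<^sub>0 'k"

text \<open>An element of G: a linear part sum_i c_i x_i (finitely supported coefficients)
  together with a polynomial part in K[Y,Z].  The carrier below requires the
  polynomial part to involve only monomials of positive degree in the y's and in the z's.\<close>
type_synonym 'k bic = "(nat \<Rightarrow>\<^sub>0 'k) \<times> 'k pol"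

definition pvar :: "var \<Rightarrow> 'k::comm_ring_1 pol" where
  "pvar v = Poly_Mapping.single (Poly_Mapping.single v 1) 1"

definition pconst :: "'k::comm_ring_1 \<Rightarrow> 'k pol" where
  "pconst c = Poly_Mapping.single 0 c"

abbreviation yy :: "nat \<Rightarrow> 'k::comm_ring_1 pol" where "yy i \<equiv> pvar (Yv i)"
abbreviation zz :: "nat \<Rightarrow> 'k::comm_ring_1 pol" where "zz i \<equiv> pvar (Zv i)"

definition ydeg :: "(var \<Rightarrow>\<^sub>0 nat) \<Rightarrow> nat" where
  "ydeg m = (\<Sum>v\<in>Poly_Mapping.keys m. case v of Yv _ \<Rightarrow> Poly_Mapping.lookup m v | Zv _ \<Rightarrow> 0)"

definition zdeg :: "(var \<Rightarrow>\<^sub>0 nat) \<Rightarrow> nat" where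
  "zdeg m = (\<Sum>v\<in>Poly_Mapping.keys m. case v of Yv _ \<Rightarrow> 0 | Zv _ \<Rightarrow> Poly_Mapping.lookup m v)"

definition bic_carrier :: "'k::comm_ring_1 bic set" where
  "bic_carrier = {a. \<forall>m\<in>Poly_Mapping.keys (snd a). 0 < ydeg m \<and> 0 < zdeg m}"

definition bic_zero :: "'k::comm_ring_1 bic" where
  "bic_zero = (0, 0)"

definition bic_add :: "'k::comm_ring_1 bic \<Rightarrow> 'k bic \<Rightarrow> 'k bic" where
  "bic_add a b = (fst a + fst b, snd a + snd b)"

definition bic_smul :: "'k::comm_ring_1 \<Rightarrow> 'k bic \<Rightarrow> 'k bic" where
  "bic_smul c a = (Poly_Mapping.map (\<lambda>x. c * x) (fst a), pconst c * snd a)"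

definition linY :: "(nat \<Rightarrow>\<^sub>0 'k::comm_ring_1) \<Rightarrow> 'k pol" where
  "linY l = (\<Sum>i\<in>Poly_Mapping.keys l. pconst (Poly_Mapping.lookup l i) * yy i)"

definition linZ :: "(nat \<Rightarrow>\<^sub>0 'k::comm_ring_1) \<Rightarrow> 'k pol" where
  "linZ l = (\<Sum>i\<in>Poly_Mapping.keys l. pconst (Poly_Mapping.lookup l i) * zz i)"

text \<open>The multiplication of G: x_i x_j = y_i z_j, x_i P = y_i P, P x_j = P z_j,
  P Q = P Q; extended bilinearly this is exactly (linY l1 + p1) * (linZ l2 + p2).\<close>
definition bic_mul :: "'k::comm_ring_1 bic \<Rightarrow> 'k bic \<Rightarrow> 'k bic" where
  "bic_mul a b = (0, (linY (fst a) + snd a) * (linZ (fst b) + snd b))"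

definition bic_x :: "nat \<Rightarrow> 'k::comm_ring_1 bic" where
  "bic_x i = (Poly_Mapping.single i 1, 0)"

definition xcomb :: "(nat \<Rightarrow> 'k::comm_ring_1) \<Rightarrow> nat set \<Rightarrow> 'k bic" where
  "xcomb c A = ((\<Sum>i\<in>A. Poly_Mapping.single i (c i)), 0)"

definition is_subspace :: "'k::comm_ring_1 bic set \<Rightarrow> bool" where
  "is_subspace S \<longleftrightarrow> S \<subseteq> bic_carrier \<and> bic_zero \<in> S \<and>
     (\<forall>a\<in>S. \<forall>b\<in>S. bic_add a b \<in> S) \<and> (\<forall>c. \<forall>a\<in>S. bic_smul c a \<in> S)"

definition is_endo :: "('k::comm_ring_1 bic \<Rightarrow> 'k bic) \<Rightarrow> bool" where
  "is_endo h \<longleftrightarrow> (\<forall>a\<in>bic_carrier. h a \<in> bic_carrier) \<and>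
     (\<forall>a\<in>bic_carrier. \<forall>b\<in>bic_carrier.
        h (bic_add a b) = bic_add (h a) (h b) \<and> h (bic_mul a b) = bic_mul (h a) (h b)) \<and>
     (\<forall>c. \<forall>a\<in>bic_carrier. h (bic_smul c a) = bic_smul c (h a))"

definition is_T_ideal :: "'k::comm_ring_1 bic set \<Rightarrow> bool" where
  "is_T_ideal I \<longleftrightarrow> is_subspace I \<and>
     (\<forall>a\<in>bic_carrier. \<forall>b\<in>I. bic_mul a b \<in> I \<and> bic_mul b a \<in> I) \<and>
     (\<forall>h. is_endo h \<longrightarrow> h ` I \<subseteq> I)"

definition T_ideal_gen :: "'k::comm_ring_1 bic \<Rightarrow> 'k bic set" where
  "T_ideal_gen f = \<Inter>{I. is_T_ideal I \<and> f \<in> I}"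

definition Fd :: "nat \<Rightarrow> 'k::comm_ring_1 bic set" where
  "Fd d = \<Inter>{S. is_subspace S \<and> (\<forall>a\<in>S. \<forall>b\<in>S. bic_mul a b \<in> S) \<and>
                 (\<forall>i\<in>{1..d}. bic_x i \<in> S)}"

text \<open>Matrices are g :: nat => nat => 'k, with indices in {1..d}.\<close>
definition invertible_mat :: "nat \<Rightarrow> (nat \<Rightarrow> nat \<Rightarrow> 'k::comm_ring_1) \<Rightarrow> bool" where
  "invertible_mat d g \<longleftrightarrow> (\<exists>h. \<forall>i\<in>{1..d}. \<forall>j\<in>{1..d}.
      (\<Sum>k\<in>{1..d}. g i k * h k j) = (if i = j then 1 else 0) \<and>
      (\<Sum>k\<in>{1..d}. h i k * g k j) = (if i = j then 1 else 0))"

text \<open>h is (an endomorphism extending) the action of g: x_j |-> sum_i g_ij x_i.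
  On F_d such an h is uniquely determined by g.\<close>
definition gl_acts :: "nat \<Rightarrow> (nat \<Rightarrow> nat \<Rightarrow> 'k::comm_ring_1) \<Rightarrow> ('k bic \<Rightarrow> 'k bic) \<Rightarrow> bool" where
  "gl_acts d g h \<longleftrightarrow> is_endo h \<and> (\<forall>j\<in>{1..d}. h (bic_x j) = xcomb (\<lambda>i. g i j) {1..d})"

definition is_GL_submodule :: "nat \<Rightarrow> 'k::comm_ring_1 bic set \<Rightarrow> bool" where
  "is_GL_submodule d M \<longleftrightarrow> is_subspace M \<and> M \<subseteq> Fd d \<and>
     (\<forall>g h. invertible_mat d g \<and> gl_acts d g h \<longrightarrow> h ` M \<subseteq> M)"

definition irreducible_GL :: "nat \<Rightarrow> 'k::comm_ring_1 bic set \<Rightarrow> bool" where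
  "irreducible_GL d M \<longleftrightarrow> is_GL_submodule d M \<and> M \<noteq> {bic_zero} \<and>
     (\<forall>N. is_GL_submodule d N \<and> N \<subseteq> M \<longrightarrow> N = {bic_zero} \<or> N = M)"

definition hw_vector :: "nat \<Rightarrow> (nat \<Rightarrow> nat) \<Rightarrow> 'k::comm_ring_1 bic \<Rightarrow> bool" where
  "hw_vector d wt v \<longleftrightarrow> v \<noteq> bic_zero \<and>
     (\<forall>t h. (\<forall>i\<in>{1..d}. t i \<noteq> 0) \<and> gl_acts d (\<lambda>i j. if i = j then t i else 0) h
        \<longrightarrow> h v = bic_smul (\<Prod>i\<in>{1..d}. t i ^ wt i) v) \<and>
     (\<forall>u h. (\<forall>i\<in>{1..d}. u i i = 1) \<and> (\<forall>i\<in>{1..d}. \<forall>j\<in>{1..d}. j < i \<longrightarrow> u i j = 0)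
        \<and> gl_acts d u h \<longrightarrow> h v = v)"

definition wt2 :: "nat \<Rightarrow> nat \<Rightarrow> nat \<Rightarrow> nat" where
  "wt2 a b = (\<lambda>i. if i = 1 then a else if i = 2 then b else 0)"

definition iso_W :: "nat \<Rightarrow> 'k::comm_ring_1 bic set \<Rightarrow> nat \<Rightarrow> nat \<Rightarrow> bool" where
  "iso_W d M l1 l2 \<longleftrightarrow> irreducible_GL d M \<and> (\<exists>v\<in>M. hw_vector d (wt2 l1 l2) v)"

definition wmu :: "nat \<Rightarrow> nat \<Rightarrow> nat \<Rightarrow> 'k::comm_ring_1 bic" where
  "wmu m1 m2 j = (0, yy 1 ^ j * (yy 1 * zz 2 - yy 2 * zz 1) ^ m2 * zz 1 ^ (m1 - m2 - j))"

end

theory Submission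
  imports Defs
begin


abbreviation lk where "lk \<equiv> Poly_Mapping.lookup"
abbreviation ks where "ks \<equiv> Poly_Mapping.keys"
abbreviation sng where "sng \<equiv> Poly_Mapping.single"

definition monev :: "(var \<Rightarrow> 'k::comm_ring_1 pol) \<Rightarrow> (var \<Rightarrow>\<^sub>0 nat) \<Rightarrow> 'k pol" where
  "monev \<sigma> m = (\<Prod>v\<in>ks m. \<sigma> v ^ lk m v)"

definition ev :: "(var \<Rightarrow> 'k::comm_ring_1 pol) \<Rightarrow> 'k pol \<Rightarrow> 'k pol" where
  "ev \<sigma> p = (\<Sum>m\<in>ks p. pconst (lk p m) * monev \<sigma> m)"

lemma pconst_0[simp]: "pconst 0 = 0" by (simp add: pconst_def)
lemma pconst_1[simp]: "pconst 1 = 1" by (simp add: pconst_def)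
lemma pconst_add: "pconst (a + b) = pconst a + pconst b" by (simp add: pconst_def single_add)
lemma pconst_mult: "pconst (a * b) = pconst a * pconst b" by (simp add: pconst_def mult_single)
lemma pconst_uminus: "pconst (- a) = - pconst a" by (simp add: pconst_def single_uminus)
lemma pconst_diff: "pconst (a - b) = pconst a - pconst b" by (simp add: pconst_def single_diff)
lemma pconst_power: "pconst (a ^ n) = pconst a ^ n"
  by (induction n) (simp_all add: pconst_mult)
lemma pconst_prod: "pconst (prod f S) = (\<Prod>x\<in>S. pconst (f x))"
  by (induction S rule: infinite_finite_induct) (simp_all add: pconst_mult)
lemma pconst_sum: "pconst (sum f S) = (\<Sum>x\<in>S. pconst (f x))"
  by (induction S rule: infinite_finite_induct) (simp_all add: pconst_add)
lemma pconst_single: "pconst c * sng m d = sng m (c * d)"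
  by (simp add: pconst_def mult_single)
lemma pconst_inj: "pconst a = pconst b \<longleftrightarrow> a = b"
  by (metis pconst_def lookup_single_eq)
lemma lookup_pconst_mult: "lk (pconst c * p) m = c * lk p m"
proof -
  have "pconst c * p = Poly_Mapping.map ((*) c) p"
    by (simp add: pconst_def mult_map_scale_conv_mult)
  then show ?thesis by (simp add: Poly_Mapping.map.rep_eq when_def)
qed
lemma keys_pconst_mult: "ks (pconst c * p) \<subseteq> ks p"
  by (auto simp: in_keys_iff lookup_pconst_mult)

lemma monev_superset:
  assumes "finite S" "ks m \<subseteq> S"
  shows "monev \<sigma> m = (\<Prod>v\<in>S. \<sigma> v ^ lk m v)"
  unfolding monev_def
  by (rule prod.mono_neutral_left) (use assms in \<open>auto simp: in_keys_iff\<close>)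

lemma monev_zero[simp]: "monev \<sigma> 0 = 1" by (simp add: monev_def)

lemma monev_add: "monev \<sigma> (m + n) = monev \<sigma> m * monev \<sigma> n"
proof -
  let ?S = "ks m \<union> ks n"
  have "ks (m + n) \<subseteq> ?S" by (rule keys_add)
  then have "monev \<sigma> (m + n) = (\<Prod>v\<in>?S. \<sigma> v ^ lk (m+n) v)"
    by (intro monev_superset) auto
  also have "\<dots> = (\<Prod>v\<in>?S. \<sigma> v ^ lk m v * \<sigma> v ^ lk n v)"
    by (simp add: lookup_add power_add)
  also have "\<dots> = monev \<sigma> m * monev \<sigma> n"
    by (simp add: prod.distrib monev_superset[of ?S])
  finally show ?thesis .
qed

lemma monev_single: "monev \<sigma> (sng v k) = \<sigma> v ^ k"
  by (cases "k = 0") (simp_all add: monev_def)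

lemma ev_superset:
  assumes "finite S" "ks p \<subseteq> S"
  shows "ev \<sigma> p = (\<Sum>m\<in>S. pconst (lk p m) * monev \<sigma> m)"
  unfolding ev_def
  by (rule sum.mono_neutral_left) (use assms in \<open>auto simp: in_keys_iff\<close>)

lemma ev_zero[simp]: "ev \<sigma> 0 = 0" by (simp add: ev_def)

lemma ev_add: "ev \<sigma> (p + q) = ev \<sigma> p + ev \<sigma> q"
proof -
  let ?S = "ks p \<union> ks q"
  have "ev \<sigma> (p + q) = (\<Sum>m\<in>?S. pconst (lk (p+q) m) * monev \<sigma> m)"
    by (intro ev_superset) (use keys_add[of p q] in auto)
  also have "\<dots> = (\<Sum>m\<in>?S. pconst (lk p m) * monev \<sigma> m + pconst (lk q m) * monev \<sigma> m)"
    by (simp add: lookup_add pconst_add distrib_right)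
  also have "\<dots> = ev \<sigma> p + ev \<sigma> q"
    by (simp add: sum.distrib ev_superset[of ?S])
  finally show ?thesis .
qed

lemma ev_single: "ev \<sigma> (sng m c) = pconst c * monev \<sigma> m"
  by (cases "c = 0") (simp_all add: ev_def)

lemma ev_sum: "ev \<sigma> (sum f S) = (\<Sum>x\<in>S. ev \<sigma> (f x))"
  by (induction S rule: infinite_finite_induct) (simp_all add: ev_add)

lemma poly_expand: "(p :: 'a \<Rightarrow>\<^sub>0 'b::comm_monoid_add) = (\<Sum>m\<in>ks p. sng m (lk p m))"
proof (rule poly_mapping_eqI)
  fix k
  show "lk p k = lk (\<Sum>m\<in>ks p. sng m (lk p m)) k"
    by (cases "k \<in> ks p") (auto simp: lookup_sum lookup_single when_def in_keys_iff)
qed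

lemma ev_mult: "ev \<sigma> (p * q) = ev \<sigma> p * ev \<sigma> q"
proof -
  have "p * q = (\<Sum>m\<in>ks p. sng m (lk p m)) * (\<Sum>n\<in>ks q. sng n (lk q n))"
    using poly_expand[of p] poly_expand[of q] by simp
  also have "\<dots> = (\<Sum>m\<in>ks p. \<Sum>n\<in>ks q. sng (m + n) (lk p m * lk q n))"
    by (simp add: sum_product mult_single)
  finally have "ev \<sigma> (p * q) = (\<Sum>m\<in>ks p. \<Sum>n\<in>ks q. pconst (lk p m * lk q n) * monev \<sigma> (m+n))"
    by (simp add: ev_sum ev_single)
  also have "\<dots> = (\<Sum>m\<in>ks p. \<Sum>n\<in>ks q. (pconst (lk p m) * monev \<sigma> m) * (pconst (lk q n) * monev \<sigma> n))"
    by (simp add: pconst_mult monev_add mult_ac)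
  also have "\<dots> = ev \<sigma> p * ev \<sigma> q"
    by (simp add: ev_def sum_product)
  finally show ?thesis .
qed

lemma ev_pconst[simp]: "ev \<sigma> (pconst c) = pconst c"
  by (simp add: pconst_def ev_single)

lemma ev_one[simp]: "ev \<sigma> 1 = 1"
  using ev_pconst[of \<sigma> 1] by simp

lemma ev_pvar[simp]: "ev \<sigma> (pvar v) = \<sigma> v"
  by (simp add: pvar_def ev_single monev_single)

lemma ev_uminus: "ev \<sigma> (- p) = - ev \<sigma> p"
  using ev_add[of \<sigma> p "-p"] by (metis add.right_inverse ev_zero neg_eq_iff_add_eq_0)

lemma ev_diff: "ev \<sigma> (p - q) = ev \<sigma> p - ev \<sigma> q"
  using ev_add[of \<sigma> p "-q"] by (simp add: ev_uminus)

lemma ev_power: "ev \<sigma> (p ^ n) = ev \<sigma> p ^ n"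
  by (induction n) (simp_all add: ev_mult)

lemma ev_prod: "ev \<sigma> (prod f S) = (\<Prod>x\<in>S. ev \<sigma> (f x))"
  by (induction S rule: infinite_finite_induct) (simp_all add: ev_mult)

lemmas ev_simps = ev_add ev_mult ev_uminus ev_diff ev_power ev_pconst ev_pvar ev_one ev_zero

lemma ev_monev: "ev \<tau> (monev \<sigma> m) = monev (\<lambda>v. ev \<tau> (\<sigma> v)) m"
  by (simp add: monev_def ev_prod ev_power)

lemma ev_comp: "ev \<tau> (ev \<sigma> p) = ev (\<lambda>v. ev \<tau> (\<sigma> v)) p"
  unfolding ev_def[of \<sigma> p] by (simp add: ev_sum ev_mult ev_monev ev_def[of _ p])

definition vars :: "'k::zero pol \<Rightarrow> var set" where
  "vars p = (\<Union>m\<in>ks p. ks m)"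

lemma ev_cong:
  assumes "\<And>v. v \<in> vars p \<Longrightarrow> \<sigma> v = \<tau> v"
  shows "ev \<sigma> p = ev \<tau> p"
proof -
  have "monev \<sigma> m = monev \<tau> m" if "m \<in> ks p" for m
    unfolding monev_def using that assms by (intro prod.cong refl) (metis UN_I vars_def)
  then show ?thesis unfolding ev_def by simp
qed

lemma pvar_power: "pvar v ^ k = (sng (sng v k) 1 :: 'k::comm_ring_1 pol)"
  by (induction k) (simp_all add: pvar_def mult_single single_add[symmetric])

lemma prod_single_one: "finite S \<Longrightarrow> (\<Prod>v\<in>S. sng (f v) (1::'k::comm_ring_1)) = sng (\<Sum>v\<in>S. f v) 1"
  by (induction S rule: finite_induct) (simp_all add: mult_single)

lemma monev_pvar: "monev pvar m = (sng m 1 :: 'k::comm_ring_1 pol)"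
proof -
  have "monev pvar m = (\<Prod>v\<in>ks m. sng (sng v (lk m v)) (1::'k))"
    by (simp add: monev_def pvar_power)
  also have "\<dots> = sng (\<Sum>v\<in>ks m. sng v (lk m v)) 1"
    by (simp add: prod_single_one)
  also have "\<dots> = sng m 1" using poly_expand[of m] by simp
  finally show ?thesis .
qed

lemma ev_pvar_id[simp]: "ev pvar p = p"
proof -
  have "ev pvar p = (\<Sum>m\<in>ks p. sng m (lk p m))"
    by (simp add: ev_def monev_pvar pconst_single)
  then show ?thesis using poly_expand[of p] by simp
qed


fun idx :: "var \<Rightarrow> nat" where "idx (Yv n) = n" | "idx (Zv n) = n"

definition wdeg :: "nat \<Rightarrow> (var \<Rightarrow>\<^sub>0 nat) \<Rightarrow> nat" where
  "wdeg i m = (\<Sum>v\<in>ks m. if idx v = i then lk m v else 0)"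

lemma monev_diag:
  "monev (\<lambda>v. pconst (c v) * pvar v) m = pconst (\<Prod>v\<in>ks m. c v ^ lk m v) * (sng m 1 :: 'k::comm_ring_1 pol)"
proof -
  have "monev (\<lambda>v. pconst (c v) * pvar v) m = (\<Prod>v\<in>ks m. pconst (c v ^ lk m v) * pvar v ^ lk m v)"
    by (simp add: monev_def power_mult_distrib pconst_power)
  also have "\<dots> = pconst (\<Prod>v\<in>ks m. c v ^ lk m v) * monev pvar m"
    by (simp add: prod.distrib pconst_prod monev_def)
  finally show ?thesis by (simp add: monev_pvar)
qed

lemma lookup_ev_diag:
  "lk (ev (\<lambda>v. pconst (c v) * pvar v) p) n = (\<Prod>v\<in>ks n. c v ^ lk n v) * lk (p :: 'k::comm_ring_1 pol) n"
proof -
  have "ev (\<lambda>v. pconst (c v) * pvar v) p = (\<Sum>m\<in>ks p. sng m (lk p m * (\<Prod>v\<in>ks m. c v ^ lk m v)))"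
    unfolding ev_def monev_diag by (simp add: mult.assoc[symmetric] pconst_mult[symmetric] pconst_single)
  then show ?thesis
    by (cases "n \<in> ks p") (auto simp: lookup_sum lookup_single when_def in_keys_iff mult.commute)
qed

lemma ev_homog:
  assumes "\<And>v. idx v = i \<Longrightarrow> \<sigma> v = L * \<sigma>' v" "\<And>v. idx v \<noteq> i \<Longrightarrow> \<sigma> v = \<sigma>' v"
    and "\<And>m. m \<in> ks p \<Longrightarrow> wdeg i m = n"
  shows "ev \<sigma> p = L ^ n * ev \<sigma>' p"
proof -
  have "monev \<sigma> m = L ^ wdeg i m * monev \<sigma>' m" for m
  proof -
    have "monev \<sigma> m = (\<Prod>v\<in>ks m. L ^ (if idx v = i then lk m v else 0) * \<sigma>' v ^ lk m v)"
      unfolding monev_def by (intro prod.cong refl) (simp add: assms power_mult_distrib)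
    also have "\<dots> = L ^ wdeg i m * monev \<sigma>' m"
      by (simp add: prod.distrib wdeg_def monev_def power_sum)
    finally show ?thesis .
  qed
  then have "ev \<sigma> p = (\<Sum>m\<in>ks p. L ^ n * (pconst (lk p m) * monev \<sigma>' m))"
    unfolding ev_def using assms(3) by (intro sum.cong refl) (simp add: mult_ac)
  then show ?thesis by (simp add: ev_def sum_distrib_left)
qed

lemma ev_const:
  "ev (\<lambda>v. pconst (\<kappa> v)) p = pconst (\<Sum>m\<in>ks p. lk p m * (\<Prod>v\<in>ks m. \<kappa> v ^ lk m v))"
  by (simp add: ev_def monev_def pconst_sum pconst_mult pconst_prod pconst_power)

lemma lookup_single_mult: "lk (sng k c * p) (k + q) = c * lk (p :: (var \<Rightarrow>\<^sub>0 nat) \<Rightarrow>\<^sub>0 'k::comm_ring_1) q"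
proof -
  have "lk (sng k c * p) (k + q) = (\<Sum>l. (c when k = l) * (\<Sum>r. lk p r when k + q = l + r))"
    by (simp add: lookup_mult lookup_single)
  also have "\<dots> = c * (\<Sum>r. lk p r when k + q = k + r)"
    by (simp add: when_mult Sum_any_when_equal)
  also have "(\<Sum>r. lk p r when k + q = k + r) = (\<Sum>r. lk p r when r = q)"
    by (intro Sum_any.cong) (auto simp: when_def)
  finally show ?thesis by simp
qed

lemma keys_single_mult: "ks (sng k c * (p :: (var \<Rightarrow>\<^sub>0 nat) \<Rightarrow>\<^sub>0 'k::comm_ring_1)) \<subseteq> {k + q | q. q \<in> ks p}"
  using keys_mult[of "sng k c" p] by (cases "c = 0") auto


definition closedV :: "'k::comm_ring_1 pol set \<Rightarrow> bool" where
  "closedV V \<longleftrightarrow> 0 \<in> V \<and> (\<forall>x\<in>V. \<forall>y\<in>V. x + y \<in> V) \<and> (\<forall>X. \<forall>x\<in>V. X * x \<in> V)"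

lemma closedV_sum: "closedV V \<Longrightarrow> (\<And>x. x \<in> S \<Longrightarrow> g x \<in> V) \<Longrightarrow> sum g S \<in> V"
  by (induction S rule: infinite_finite_induct) (auto simp: closedV_def)

lemma closedV_add: "closedV V \<Longrightarrow> x \<in> V \<Longrightarrow> y \<in> V \<Longrightarrow> x + y \<in> V"
  by (auto simp: closedV_def)

lemma closedV_mult: "closedV V \<Longrightarrow> x \<in> V \<Longrightarrow> X * x \<in> V"
  by (auto simp: closedV_def)

lemma closedV_zero: "closedV V \<Longrightarrow> 0 \<in> V"
  by (auto simp: closedV_def)

lemma closedV_diff: "closedV V \<Longrightarrow> x \<in> V \<Longrightarrow> y \<in> V \<Longrightarrow> x - y \<in> V"
  using closedV_add[of V x "(-1) * y"] closedV_mult[of V y "-1"] by simp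

lemma monev_upd: "monev (pvar(w := A)) m = A ^ lk m w * (sng (Poly_Mapping.update w 0 m) 1 :: 'k::comm_ring_1 pol)"
proof (cases "w \<in> ks m")
  case True
  have ku: "ks (Poly_Mapping.update w 0 m) = ks m - {w}"
    by (simp add: keys_update)
  have "monev (pvar(w := A)) m = A ^ lk m w * (\<Prod>v\<in>ks m - {w}. pvar v ^ lk m v)"
    unfolding monev_def using True by (simp add: prod.remove)
  also have "(\<Prod>v\<in>ks m - {w}. pvar v ^ lk m v) = monev pvar (Poly_Mapping.update w 0 m)"
    unfolding monev_def ku by (intro prod.cong refl) (auto simp: lookup_update)
  finally show ?thesis by (simp only: monev_pvar)
next
  case False
  then have "Poly_Mapping.update w 0 m = m"
    by (intro poly_mapping_eqI) (auto simp: lookup_update in_keys_iff)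
  moreover have "monev (pvar(w := A)) m = monev pvar m"
    unfolding monev_def using False by (intro prod.cong refl) auto
  ultimately show ?thesis using False by (simp add: monev_pvar in_keys_iff)
qed

definition cf :: "var \<Rightarrow> nat \<Rightarrow> 'k::comm_ring_1 pol \<Rightarrow> 'k pol" where
  "cf w r p = (\<Sum>m\<in>{m\<in>ks p. lk m w = r}. pconst (lk p m) * sng (Poly_Mapping.update w 0 m) 1)"

lemma ev_decomp:
  "ev (pvar(w := A)) p = (\<Sum>r\<in>(\<lambda>m. lk m w) ` ks p. A ^ r * cf w r p)"
proof -
  have "ev (pvar(w := A)) p = (\<Sum>m\<in>ks p. A ^ lk m w * (pconst (lk p m) * sng (Poly_Mapping.update w 0 m) 1))"
    unfolding ev_def monev_upd by (simp add: mult_ac)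
  also have "\<dots> = (\<Sum>r\<in>(\<lambda>m. lk m w) ` ks p. \<Sum>m\<in>{m\<in>ks p. lk m w = r}. A ^ lk m w * (pconst (lk p m) * sng (Poly_Mapping.update w 0 m) 1))"
    by (rule sum.group[symmetric]) auto
  also have "\<dots> = (\<Sum>r\<in>(\<lambda>m. lk m w) ` ks p. A ^ r * cf w r p)"
    unfolding cf_def sum_distrib_left by (intro sum.cong refl) auto
  finally show ?thesis .
qed

lemma vdm:
  fixes C :: "nat \<Rightarrow> 'k::field_char_0 pol"
  assumes V: "closedV V"
  shows "(\<forall>s. s \<noteq> 0 \<longrightarrow> (\<Sum>r\<le>N. pconst (s ^ r) * C r) \<in> V) \<Longrightarrow> r \<le> N \<Longrightarrow> C r \<in> V"
proof (induction N arbitrary: C r)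
  case 0
  then show ?case using spec[OF "0.prems"(1), of 1] by simp
next
  case (Suc N)
  define M where "M = Suc N"
  define f where "f s = (\<Sum>r\<le>M. pconst (s ^ r) * C r)" for s :: 'k
  have fV: "s \<noteq> 0 \<Longrightarrow> f s \<in> V" for s using Suc.prems(1) by (simp add: f_def M_def)
  define C' where "C' r = pconst (2 ^ r - 2 ^ M) * C r" for r
  have "(\<Sum>r\<le>N. pconst (s ^ r) * C' r) \<in> V" if "s \<noteq> 0" for s
  proof -
    have "f (2 * s) - pconst (2 ^ M) * f s = (\<Sum>r\<le>M. pconst ((2 * s) ^ r - 2 ^ M * s ^ r) * C r)"
      by (simp add: f_def sum_distrib_left sum_subtractf[symmetric] pconst_diff pconst_mult
          left_diff_distrib right_diff_distrib mult_ac)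
    also have "\<dots> = (\<Sum>r\<le>N. pconst ((2 * s) ^ r - 2 ^ M * s ^ r) * C r)"
      by (simp add: M_def power_mult_distrib)
    also have "\<dots> = (\<Sum>r\<le>N. pconst (s ^ r) * C' r)"
      by (intro sum.cong refl) (simp add: C'_def pconst_mult[symmetric] power_mult_distrib algebra_simps)
    moreover have "f (2 * s) - pconst (2 ^ M) * f s \<in> V"
      using that by (intro closedV_diff[OF V] fV closedV_mult[OF V]) simp_all
    ultimately show ?thesis by simp
  qed
  then have C'V: "r \<le> N \<Longrightarrow> C' r \<in> V" for r using Suc.IH by blast
  have CV: "r \<le> N \<Longrightarrow> C r \<in> V" for r
  proof -
    assume r: "r \<le> N"
    have "(2::'k) ^ r \<noteq> 2 ^ M"
    proof
      assume "(2::'k) ^ r = 2 ^ M"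
      then have "of_nat (2 ^ r) = (of_nat (2 ^ M) :: 'k)" by simp
      then have "(2::nat) ^ r = 2 ^ M" by (simp only: of_nat_eq_iff)
      moreover have "(2::nat) ^ r \<le> 2 ^ N" using r by (intro power_increasing) auto
      ultimately show False by (simp add: M_def)
    qed
    then have "C r = pconst (1 / (2 ^ r - 2 ^ M)) * C' r"
      by (simp add: C'_def mult.assoc[symmetric] pconst_mult[symmetric])
    then show ?thesis using closedV_mult[OF V C'V[OF r]] by simp
  qed
  have "C M = f 1 - (\<Sum>r\<le>N. C r)"
    by (simp add: f_def M_def)
  moreover have "(\<Sum>r\<le>N. C r) \<in> V" by (rule closedV_sum[OF V]) (simp add: CV)
  ultimately have "C M \<in> V"
    using closedV_diff[OF V fV[of 1]] by simp
  then show ?case using CV Suc.prems(2) by (cases "r \<le> N") (auto simp: M_def le_Suc_eq)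
qed

lemma onevar:
  fixes p :: "'k::field_char_0 pol"
  assumes V: "closedV V" and H: "\<And>s. s \<noteq> 0 \<Longrightarrow> ev (pvar(w := pconst s)) p \<in> V"
  shows "ev (pvar(w := A)) p \<in> V"
proof -
  define R where "R = (\<lambda>m. lk m w) ` ks p"
  have "finite R" by (simp add: R_def)
  then have N: "R \<subseteq> {..\<Sum>R}" by (auto intro: member_le_sum)
  define N where "N = \<Sum>R"
  note N = N[folded N_def]
  define C where "C r = (if r \<in> R then cf w r p else 0)" for r
  have eq: "ev (pvar(w := B)) p = (\<Sum>r\<le>N. B ^ r * C r)" for B
    unfolding ev_decomp R_def[symmetric]
    by (rule sum.mono_neutral_cong_left) (use N in \<open>auto simp: C_def\<close>)
  have "C r \<in> V" if "r \<le> N" for r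
    using vdm[OF V _ that, of C] H eq by (simp add: pconst_power)
  then show ?thesis unfolding eq
    by (intro closedV_sum[OF V] closedV_mult[OF V]) auto
qed

lemma closedV_zero_set: "closedV {0 :: 'k::comm_ring_1 pol}"
  by (simp add: closedV_def)

lemma closedV_intro:
  fixes V :: "'k::comm_ring_1 pol set"
  assumes "0 \<in> V" "\<And>x y. x \<in> V \<Longrightarrow> y \<in> V \<Longrightarrow> x + y \<in> V"
    "\<And>c x. x \<in> V \<Longrightarrow> pconst c * x \<in> V" "\<And>v x. x \<in> V \<Longrightarrow> pvar v * x \<in> V"
  shows "closedV V"
proof -
  have pw: "pvar v ^ k * x \<in> V" if "x \<in> V" for v k x
    using that by (induction k) (simp_all add: mult.assoc assms(4))
  have pr: "finite S \<Longrightarrow> (\<Prod>v\<in>S. pvar v ^ f v) * x \<in> V" if "x \<in> V" for S f x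
  proof (induction S rule: finite_induct)
    case empty then show ?case using that by simp
  next
    case (insert a S) then show ?case by (simp add: mult.assoc pw)
  qed
  have sm: "finite S \<Longrightarrow> (\<And>m. m \<in> S \<Longrightarrow> g m \<in> V) \<Longrightarrow> sum g S \<in> V" for S g
    by (induction S rule: finite_induct) (auto simp: assms(1,2))
  have "X * x \<in> V" if "x \<in> V" for X x
  proof -
    have "X * x = ev pvar X * x" by simp
    also have "\<dots> = (\<Sum>m\<in>ks X. pconst (lk X m) * monev pvar m * x)"
      unfolding ev_def by (simp add: sum_distrib_right)
    also have "\<dots> = (\<Sum>m\<in>ks X. pconst (lk X m) * (monev pvar m * x))"
      by (simp add: mult.assoc)
    finally have "X * x = (\<Sum>m\<in>ks X. pconst (lk X m) * (monev pvar m * x))" .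
    also have "\<dots> \<in> V"
      by (intro sm finite_keys assms(3)) (simp add: monev_def pr that)
    finally show ?thesis .
  qed
  then show ?thesis using assms(1,2) by (simp add: closedV_def)
qed


abbreviation scal :: "'k::comm_ring_1 \<Rightarrow> (nat \<Rightarrow>\<^sub>0 'k) \<Rightarrow> (nat \<Rightarrow>\<^sub>0 'k)" where
  "scal c l \<equiv> Poly_Mapping.map (\<lambda>x. c * x) l"

lemma lk_scal[simp]: "lk (scal c l) i = c * lk l i"
  by (simp add: Poly_Mapping.map.rep_eq when_def)

lemma scal_zero[simp]: "scal c 0 = 0"
  by (intro poly_mapping_eqI) simp

definition lmap :: "(nat \<Rightarrow> (nat \<Rightarrow>\<^sub>0 'k::comm_ring_1)) \<Rightarrow> (nat \<Rightarrow>\<^sub>0 'k) \<Rightarrow> (nat \<Rightarrow>\<^sub>0 'k)" where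
  "lmap E l = (\<Sum>j\<in>ks l. scal (lk l j) (E j))"

lemma lookup_lmap: "lk (lmap E l) i = (\<Sum>j\<in>ks l. lk l j * lk (E j) i)"
  by (simp add: lmap_def lookup_sum)

lemma lookup_lmap_superset: "finite S \<Longrightarrow> ks l \<subseteq> S \<Longrightarrow> lk (lmap E l) i = (\<Sum>j\<in>S. lk l j * lk (E j) i)"
  unfolding lookup_lmap by (rule sum.mono_neutral_left) (auto simp: in_keys_iff)

lemma lmap_add: "lmap E (l1 + l2) = lmap E l1 + lmap E l2"
proof (rule poly_mapping_eqI)
  fix i
  let ?S = "ks l1 \<union> ks l2"
  have "ks (l1 + l2) \<subseteq> ?S" by (rule keys_add)
  then show "lk (lmap E (l1 + l2)) i = lk (lmap E l1 + lmap E l2) i"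
    by (simp add: lookup_lmap_superset[of ?S] lookup_add distrib_right sum.distrib)
qed

lemma lmap_scal: "lmap E (scal c l) = scal c (lmap E l)"
proof (rule poly_mapping_eqI)
  fix i
  have "ks (scal c l) \<subseteq> ks l" by (auto simp: in_keys_iff)
  then have "lk (lmap E (scal c l)) i = (\<Sum>j\<in>ks l. lk (scal c l) j * lk (E j) i)"
    by (intro lookup_lmap_superset) auto
  then show "lk (lmap E (scal c l)) i = lk (scal c (lmap E l)) i"
    by (simp add: lookup_lmap sum_distrib_left mult.assoc)
qed

lemma lmap_zero[simp]: "lmap E 0 = 0" by (simp add: lmap_def)

lemma lmap_single1: "lmap E (sng j 1) = E j"
  by (simp add: lmap_def Poly_Mapping.map.rep_eq poly_mapping_eqI when_def)

lemma linY_superset: "finite S \<Longrightarrow> ks l \<subseteq> S \<Longrightarrow> linY l = (\<Sum>i\<in>S. pconst (lk l i) * yy i)"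
  unfolding linY_def by (rule sum.mono_neutral_left) (auto simp: in_keys_iff)
lemma linZ_superset: "finite S \<Longrightarrow> ks l \<subseteq> S \<Longrightarrow> linZ l = (\<Sum>i\<in>S. pconst (lk l i) * zz i)"
  unfolding linZ_def by (rule sum.mono_neutral_left) (auto simp: in_keys_iff)

lemma linY_add: "linY (l1 + l2) = linY l1 + linY l2"
proof -
  let ?S = "ks l1 \<union> ks l2"
  have "ks (l1 + l2) \<subseteq> ?S" by (rule keys_add)
  then show ?thesis
    by (simp add: linY_superset[of ?S] lookup_add pconst_add distrib_right sum.distrib)
qed
lemma linZ_add: "linZ (l1 + l2) = linZ l1 + linZ l2"
proof -
  let ?S = "ks l1 \<union> ks l2"
  have "ks (l1 + l2) \<subseteq> ?S" by (rule keys_add)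
  then show ?thesis
    by (simp add: linZ_superset[of ?S] lookup_add pconst_add distrib_right sum.distrib)
qed

lemma linY_scal: "linY (scal c l) = pconst c * linY l"
proof -
  have "ks (scal c l) \<subseteq> ks l" by (auto simp: in_keys_iff)
  then have "linY (scal c l) = (\<Sum>i\<in>ks l. pconst (lk (scal c l) i) * yy i)"
    by (intro linY_superset) auto
  then show ?thesis
    by (simp add: linY_def sum_distrib_left pconst_mult mult.assoc)
qed
lemma linZ_scal: "linZ (scal c l) = pconst c * linZ l"
proof -
  have "ks (scal c l) \<subseteq> ks l" by (auto simp: in_keys_iff)
  then have "linZ (scal c l) = (\<Sum>i\<in>ks l. pconst (lk (scal c l) i) * zz i)"
    by (intro linZ_superset) auto
  then show ?thesis
    by (simp add: linZ_def sum_distrib_left pconst_mult mult.assoc)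
qed

lemma linY_zero[simp]: "linY 0 = 0" by (simp add: linY_def)
lemma linZ_zero[simp]: "linZ 0 = 0" by (simp add: linZ_def)

lemma linY_sum: "linY (sum f S) = (\<Sum>x\<in>S. linY (f x))"
  by (induction S rule: infinite_finite_induct) (simp_all add: linY_add)
lemma linZ_sum: "linZ (sum f S) = (\<Sum>x\<in>S. linZ (f x))"
  by (induction S rule: infinite_finite_induct) (simp_all add: linZ_add)

lemma linY_single: "linY (sng i c) = pconst c * yy i"
  by (cases "c = 0") (simp_all add: linY_def)
lemma linZ_single: "linZ (sng i c) = pconst c * zz i"
  by (cases "c = 0") (simp_all add: linZ_def)

definition \<sigma>E :: "(nat \<Rightarrow> (nat \<Rightarrow>\<^sub>0 'k::comm_ring_1)) \<Rightarrow> var \<Rightarrow> 'k pol" where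
  "\<sigma>E E v = (case v of Yv j \<Rightarrow> linY (E j) | Zv j \<Rightarrow> linZ (E j))"

lemma \<sigma>E_simps[simp]: "\<sigma>E E (Yv j) = linY (E j)" "\<sigma>E E (Zv j) = linZ (E j)"
  by (simp_all add: \<sigma>E_def)

lemma ev_linY: "ev \<sigma> (linY l) = (\<Sum>i\<in>ks l. pconst (lk l i) * \<sigma> (Yv i))"
  by (simp add: linY_def ev_sum ev_mult pvar_def[symmetric])
lemma ev_linZ: "ev \<sigma> (linZ l) = (\<Sum>i\<in>ks l. pconst (lk l i) * \<sigma> (Zv i))"
  by (simp add: linZ_def ev_sum ev_mult pvar_def[symmetric])

lemma ev_\<sigma>E_linY: "ev (\<sigma>E E) (linY l) = linY (lmap E l)"
  by (simp add: ev_linY lmap_def linY_sum linY_scal)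
lemma ev_\<sigma>E_linZ: "ev (\<sigma>E E) (linZ l) = linZ (lmap E l)"
  by (simp add: ev_linZ lmap_def linZ_sum linZ_scal)

definition linsub :: "(nat \<Rightarrow> (nat \<Rightarrow>\<^sub>0 'k::comm_ring_1)) \<Rightarrow> 'k bic \<Rightarrow> 'k bic" where
  "linsub E a = (lmap E (fst a), ev (\<sigma>E E) (snd a))"

definition yw :: "var \<Rightarrow> nat" where "yw v = (case v of Yv _ \<Rightarrow> 1 | Zv _ \<Rightarrow> 0)"
definition zw :: "var \<Rightarrow> nat" where "zw v = (case v of Yv _ \<Rightarrow> 0 | Zv _ \<Rightarrow> 1)"

lemma ydeg_alt: "ydeg m = (\<Sum>v\<in>ks m. yw v * lk m v)"
  unfolding ydeg_def yw_def by (intro sum.cong refl) (simp split: var.split)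
lemma zdeg_alt: "zdeg m = (\<Sum>v\<in>ks m. zw v * lk m v)"
  unfolding zdeg_def zw_def by (intro sum.cong refl) (simp split: var.split)

lemma wsum_superset: "finite S \<Longrightarrow> ks m \<subseteq> S \<Longrightarrow> (\<Sum>v\<in>ks m. (f v :: nat) * lk m v) = (\<Sum>v\<in>S. f v * lk m v)"
  by (rule sum.mono_neutral_left) (auto simp: in_keys_iff)

lemma wsum_add: "(\<Sum>v\<in>ks (m + n). (f v :: nat) * lk (m + n) v) = (\<Sum>v\<in>ks m. f v * lk m v) + (\<Sum>v\<in>ks n. f v * lk n v)"
proof -
  let ?S = "ks m \<union> ks n"
  have S: "ks (m + n) \<subseteq> ?S" by (rule keys_add)
  have "(\<Sum>v\<in>ks (m + n). (f v :: nat) * lk (m + n) v) = (\<Sum>v\<in>?S. f v * lk (m + n) v)"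
    by (rule wsum_superset) (use S in auto)
  also have "\<dots> = (\<Sum>v\<in>?S. f v * lk m v) + (\<Sum>v\<in>?S. f v * lk n v)"
    by (simp add: lookup_add distrib_left sum.distrib)
  also have "(\<Sum>v\<in>?S. f v * lk m v) = (\<Sum>v\<in>ks m. f v * lk m v)"
    by (rule wsum_superset[symmetric]) auto
  also have "(\<Sum>v\<in>?S. f v * lk n v) = (\<Sum>v\<in>ks n. f v * lk n v)"
    by (rule wsum_superset[symmetric]) auto
  finally show ?thesis .
qed

lemma ydeg_add: "ydeg (m + n) = ydeg m + ydeg n" by (simp add: ydeg_alt wsum_add)
lemma zdeg_add: "zdeg (m + n) = zdeg m + zdeg n" by (simp add: zdeg_alt wsum_add)

definition Ypos :: "'k::comm_ring_1 pol \<Rightarrow> bool" where "Ypos Q \<longleftrightarrow> (\<forall>m\<in>ks Q. 0 < ydeg m)"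
definition Zpos :: "'k::comm_ring_1 pol \<Rightarrow> bool" where "Zpos Q \<longleftrightarrow> (\<forall>m\<in>ks Q. 0 < zdeg m)"

lemma carrier_iff: "a \<in> bic_carrier \<longleftrightarrow> Ypos (snd a) \<and> Zpos (snd a)"
  by (auto simp: bic_carrier_def Ypos_def Zpos_def)

lemma Ypos_add: "Ypos A \<Longrightarrow> Ypos B \<Longrightarrow> Ypos (A + B)"
  unfolding Ypos_def using keys_add[of A B] by blast
lemma Zpos_add: "Zpos A \<Longrightarrow> Zpos B \<Longrightarrow> Zpos (A + B)"
  unfolding Zpos_def using keys_add[of A B] by blast
lemma Ypos_zero[simp]: "Ypos 0" by (simp add: Ypos_def)
lemma Zpos_zero[simp]: "Zpos 0" by (simp add: Zpos_def)
lemma Ypos_sum: "(\<And>x. x \<in> S \<Longrightarrow> Ypos (f x)) \<Longrightarrow> Ypos (sum f S)"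
  by (induction S rule: infinite_finite_induct) (auto intro: Ypos_add)
lemma Zpos_sum: "(\<And>x. x \<in> S \<Longrightarrow> Zpos (f x)) \<Longrightarrow> Zpos (sum f S)"
  by (induction S rule: infinite_finite_induct) (auto intro: Zpos_add)
lemma Ypos_multL: "Ypos A \<Longrightarrow> Ypos (A * B)"
  unfolding Ypos_def
proof
  fix m assume A: "\<forall>m\<in>ks A. 0 < ydeg m" and "m \<in> ks (A * B)"
  then obtain x y where "x \<in> ks A" "m = x + y" using keys_mult[of A B] by blast
  then show "0 < ydeg m" using A by (simp add: ydeg_add)
qed
lemma Zpos_multL: "Zpos A \<Longrightarrow> Zpos (A * B)"
  unfolding Zpos_def
proof
  fix m assume A: "\<forall>m\<in>ks A. 0 < zdeg m" and "m \<in> ks (A * B)"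
  then obtain x y where "x \<in> ks A" "m = x + y" using keys_mult[of A B] by blast
  then show "0 < zdeg m" using A by (simp add: zdeg_add)
qed
lemma Ypos_multR: "Ypos B \<Longrightarrow> Ypos (A * B)"
  using Ypos_multL[of B A] by (simp add: mult.commute)
lemma Zpos_multR: "Zpos B \<Longrightarrow> Zpos (A * B)"
  using Zpos_multL[of B A] by (simp add: mult.commute)

lemma ydeg_single1: "ydeg (sng (Yv i) 1) = 1" by (simp add: ydeg_def)
lemma zdeg_single1: "zdeg (sng (Zv i) 1) = 1" by (simp add: zdeg_def)

lemma Ypos_yy: "Ypos (pconst c * yy i)"
  unfolding Ypos_def
proof
  fix m assume "m \<in> ks (pconst c * yy i)"
  then have "m = sng (Yv i) 1" using keys_pconst_mult[of c "yy i"] by (auto simp: pvar_def)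
  then show "0 < ydeg m" by (simp add: ydeg_def)
qed
lemma Zpos_zz: "Zpos (pconst c * zz i)"
  unfolding Zpos_def
proof
  fix m assume "m \<in> ks (pconst c * zz i)"
  then have "m = sng (Zv i) 1" using keys_pconst_mult[of c "zz i"] by (auto simp: pvar_def)
  then show "0 < zdeg m" by (simp add: zdeg_def)
qed

lemma Ypos_linY: "Ypos (linY l)" unfolding linY_def by (intro Ypos_sum Ypos_yy)
lemma Zpos_linZ: "Zpos (linZ l)" unfolding linZ_def by (intro Zpos_sum Zpos_zz)

lemma Ypos_pconst: "Ypos A \<Longrightarrow> Ypos (pconst c * A)"
  by (rule Ypos_multR)
lemma Zpos_pconst: "Zpos A \<Longrightarrow> Zpos (pconst c * A)"
  by (rule Zpos_multR)

lemma monev_Ypos: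
  assumes "v \<in> ks m" "Ypos (\<sigma> v)"
  shows "Ypos (monev \<sigma> m)"
proof -
  have "monev \<sigma> m = \<sigma> v ^ lk m v * (\<Prod>u\<in>ks m - {v}. \<sigma> u ^ lk m u)"
    unfolding monev_def using assms(1) by (simp add: prod.remove)
  moreover obtain k where "lk m v = Suc k" using assms(1) not0_implies_Suc by (auto simp: in_keys_iff)
  ultimately have "monev \<sigma> m = \<sigma> v * (\<sigma> v ^ k * (\<Prod>u\<in>ks m - {v}. \<sigma> u ^ lk m u))"
    by (simp add: mult.assoc)
  then show ?thesis using assms(2) Ypos_multL by metis
qed
lemma monev_Zpos:
  assumes "v \<in> ks m" "Zpos (\<sigma> v)"
  shows "Zpos (monev \<sigma> m)"
proof -
  have "monev \<sigma> m = \<sigma> v ^ lk m v * (\<Prod>u\<in>ks m - {v}. \<sigma> u ^ lk m u)"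
    unfolding monev_def using assms(1) by (simp add: prod.remove)
  moreover obtain k where "lk m v = Suc k" using assms(1) not0_implies_Suc by (auto simp: in_keys_iff)
  ultimately have "monev \<sigma> m = \<sigma> v * (\<sigma> v ^ k * (\<Prod>u\<in>ks m - {v}. \<sigma> u ^ lk m u))"
    by (simp add: mult.assoc)
  then show ?thesis using assms(2) Zpos_multL by metis
qed

lemma ydeg_pos_ex: "0 < ydeg m \<Longrightarrow> \<exists>i. Yv i \<in> ks m"
proof (rule ccontr)
  assume pos: "0 < ydeg m" and no: "\<nexists>i. Yv i \<in> ks m"
  have "yw v * lk m v = 0" if "v \<in> ks m" for v
    using that no by (cases v) (auto simp: yw_def)
  then have "ydeg m = 0" unfolding ydeg_alt by (intro sum.neutral) auto
  then show False using pos by simp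
qed
lemma zdeg_pos_ex: "0 < zdeg m \<Longrightarrow> \<exists>i. Zv i \<in> ks m"
proof (rule ccontr)
  assume pos: "0 < zdeg m" and no: "\<nexists>i. Zv i \<in> ks m"
  have "zw v * lk m v = 0" if "v \<in> ks m" for v
    using that no by (cases v) (auto simp: zw_def)
  then have "zdeg m = 0" unfolding zdeg_alt by (intro sum.neutral) auto
  then show False using pos by simp
qed

lemma ev_\<sigma>E_carrier:
  assumes "Ypos P" "Zpos P"
  shows "Ypos (ev (\<sigma>E E) P) \<and> Zpos (ev (\<sigma>E E) P)"
proof -
  have "Ypos (monev (\<sigma>E E) m) \<and> Zpos (monev (\<sigma>E E) m)" if "m \<in> ks P" for m
  proof -
    have "0 < ydeg m" using assms(1) that by (simp add: Ypos_def)
    then obtain i where i: "Yv i \<in> ks m" using ydeg_pos_ex by blast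
    have "0 < zdeg m" using assms(2) that by (simp add: Zpos_def)
    then obtain j where j: "Zv j \<in> ks m" using zdeg_pos_ex by blast
    show ?thesis using monev_Ypos[OF i, of "\<sigma>E E"] monev_Zpos[OF j, of "\<sigma>E E"] by (simp add: Ypos_linY Zpos_linZ)
  qed
  then show ?thesis unfolding ev_def
    by (intro conjI Ypos_sum Zpos_sum Ypos_pconst Zpos_pconst) auto
qed

lemma carrier_add: "a \<in> bic_carrier \<Longrightarrow> b \<in> bic_carrier \<Longrightarrow> bic_add a b \<in> bic_carrier"
  by (simp add: carrier_iff bic_add_def Ypos_add Zpos_add)
lemma carrier_smul: "a \<in> bic_carrier \<Longrightarrow> bic_smul c a \<in> bic_carrier"
  by (simp add: carrier_iff bic_smul_def Ypos_pconst Zpos_pconst)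
lemma carrier_mul: "a \<in> bic_carrier \<Longrightarrow> b \<in> bic_carrier \<Longrightarrow> bic_mul a b \<in> bic_carrier"
  by (simp add: carrier_iff bic_mul_def Ypos_multL Zpos_multR Ypos_add Zpos_add Ypos_linY Zpos_linZ)
lemma carrier_x: "bic_x i \<in> bic_carrier"
  by (simp add: carrier_iff bic_x_def)
lemma carrier_zero: "bic_zero \<in> bic_carrier"
  by (simp add: carrier_iff bic_zero_def)

lemma linsub_endo:
  fixes E :: "nat \<Rightarrow> (nat \<Rightarrow>\<^sub>0 'k::comm_ring_1)"
  shows "is_endo (linsub E)"
  unfolding is_endo_def
proof (intro conjI ballI allI)
  fix a :: "'k bic" assume "a \<in> bic_carrier"
  then show "linsub E a \<in> bic_carrier"
    using ev_\<sigma>E_carrier by (auto simp: carrier_iff linsub_def)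
next
  fix a b :: "'k bic"
  show "linsub E (bic_add a b) = bic_add (linsub E a) (linsub E b)"
    by (simp add: linsub_def bic_add_def lmap_add ev_add)
  show "linsub E (bic_mul a b) = bic_mul (linsub E a) (linsub E b)"
    by (simp add: linsub_def bic_mul_def ev_add ev_mult ev_\<sigma>E_linY ev_\<sigma>E_linZ)
next
  fix c and a :: "'k bic"
  show "linsub E (bic_smul c a) = bic_smul c (linsub E a)"
    by (simp add: linsub_def bic_smul_def lmap_scal ev_mult)
qed

lemma linsub_x: "linsub E (bic_x j) = (E j, 0)"
  by (simp add: linsub_def bic_x_def lmap_single1)


fun venc :: "var \<Rightarrow> nat" where "venc (Yv n) = 2 * n" | "venc (Zv n) = 2 * n + 1"
lemma venc_inj: "venc a = venc b \<Longrightarrow> a = b"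
  by (cases a; cases b; simp; presburger)

instantiation var :: linorder begin
definition less_eq_var :: "var \<Rightarrow> var \<Rightarrow> bool" where "less_eq_var a b \<longleftrightarrow> venc a \<le> venc b"
definition less_var :: "var \<Rightarrow> var \<Rightarrow> bool" where "less_var a b \<longleftrightarrow> venc a < venc b"
instance by standard (auto simp: less_eq_var_def less_var_def intro: venc_inj)
end

lemma twovar:
  fixes \<Phi> :: "'k::field_char_0 pol"
  assumes V: "closedV V" and w: "w1 \<noteq> w2"
    and H: "\<And>s1 s2. s1 \<noteq> 0 \<Longrightarrow> s2 \<noteq> 0 \<Longrightarrow> ev (pvar(w2 := pconst s2)) (ev (pvar(w1 := pconst s1)) \<Phi>) \<in> V"
    and B: "\<And>X. ev (pvar(w1 := X)) B = B"
  shows "ev (pvar(w1 := A)) (ev (pvar(w2 := B)) \<Phi>) \<in> V"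
proof -
  have step1: "ev (pvar(w2 := B)) (ev (pvar(w1 := pconst s1)) \<Phi>) \<in> V" if "s1 \<noteq> 0" for s1
    using onevar[OF V, of w2 "ev (pvar(w1 := pconst s1)) \<Phi>" B] H that by blast
  have comm: "ev (pvar(w1 := pconst s1)) (ev (pvar(w2 := B)) \<Phi>) = ev (pvar(w2 := B)) (ev (pvar(w1 := pconst s1)) \<Phi>)" for s1
  proof -
    have "(\<lambda>v. ev (pvar(w1 := pconst s1)) ((pvar(w2 := B)) v)) = (\<lambda>v. ev (pvar(w2 := B)) ((pvar(w1 := pconst s1)) v))"
      using w B by (auto simp: fun_eq_iff)
    then show ?thesis by (simp add: ev_comp)
  qed
  show ?thesis
    using onevar[OF V, of w1 "ev (pvar(w2 := B)) \<Phi>" A] step1 comm by simp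
qed

lemma ev_cong_on:
  assumes "vars P \<subseteq> U" "\<And>v. v \<in> U \<Longrightarrow> \<sigma> v = \<tau> v"
  shows "ev \<sigma> P = ev \<tau> P"
  using assms by (intro ev_cong) auto

definition Egl :: "nat \<Rightarrow> (nat \<Rightarrow> nat \<Rightarrow> 'k::comm_ring_1) \<Rightarrow> nat \<Rightarrow> (nat \<Rightarrow>\<^sub>0 'k)" where
  "Egl d g j = (if j \<in> {1..d} then (\<Sum>i\<in>{1..d}. sng i (g i j)) else sng j 1)"

lemma gl_acts_Egl: "gl_acts d g (linsub (Egl d g))"
  by (simp add: gl_acts_def linsub_endo linsub_x Egl_def xcomb_def)

lemma Egl_in: "j \<in> {1..d} \<Longrightarrow> Egl d g j = (\<Sum>i\<in>{1..d}. sng i (g i j))"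
  unfolding Egl_def by (rule if_P)
lemma Egl_out: "j \<notin> {1..d} \<Longrightarrow> Egl d g j = sng j 1"
  unfolding Egl_def by (rule if_not_P)

lemma lookup_Egl_in: "j \<in> {1..d} \<Longrightarrow> lk (Egl d g j) k = (if k \<in> {1..d} then g k j else 0)"
  by (simp add: Egl_in lookup_sum lookup_single when_def del: atLeastAtMost_iff)

lemma linY_Egl_in: "j \<in> {1..d} \<Longrightarrow> linY (Egl d g j) = (\<Sum>i\<in>{1..d}. pconst (g i j) * yy i)"
  by (subst linY_superset[of "{1..d}"]) (auto simp: lookup_Egl_in in_keys_iff split: if_splits)
lemma linZ_Egl_in: "j \<in> {1..d} \<Longrightarrow> linZ (Egl d g j) = (\<Sum>i\<in>{1..d}. pconst (g i j) * zz i)"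
  by (subst linZ_superset[of "{1..d}"]) (auto simp: lookup_Egl_in in_keys_iff split: if_splits)

lemma linY_Egl_out: "j \<notin> {1..d} \<Longrightarrow> linY (Egl d g j) = yy j"
  by (simp add: Egl_out linY_single del: atLeastAtMost_iff)
lemma linZ_Egl_out: "j \<notin> {1..d} \<Longrightarrow> linZ (Egl d g j) = zz j"
  by (simp add: Egl_out linZ_single del: atLeastAtMost_iff)

lemma sum_delta_pconst:
  "i0 \<in> S \<Longrightarrow> finite S \<Longrightarrow> (\<Sum>i\<in>S. pconst (if i = i0 then c i else 0) * (f i :: 'k::comm_ring_1 pol)) = pconst (c i0) * f i0"
proof -
  assume "i0 \<in> S" "finite S"
  moreover have "(\<Sum>i\<in>S. pconst (if i = i0 then c i else 0) * f i) = (\<Sum>i\<in>S. if i = i0 then pconst (c i0) * f i0 else 0)"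
    by (intro sum.cong refl) auto
  ultimately show ?thesis by simp
qed

definition diagm :: "(nat \<Rightarrow> 'k::comm_ring_1) \<Rightarrow> nat \<Rightarrow> nat \<Rightarrow> 'k" where
  "diagm t i j = (if i = j then t i else 0)"

definition Ediag :: "(nat \<Rightarrow> 'k::comm_ring_1) \<Rightarrow> nat \<Rightarrow> (nat \<Rightarrow>\<^sub>0 'k)" where
  "Ediag c j = sng j (c j)"

lemma Egl_diag: "Egl d (diagm t) = Ediag (\<lambda>j. if j \<in> {1..d} then t j else 1)"
proof
  fix j
  show "Egl d (diagm t) j = Ediag (\<lambda>j. if j \<in> {1..d} then t j else 1) j"
  proof (cases "j \<in> {1..d}")
    case True
    have "(\<Sum>i\<in>{1..d}. sng i (diagm t i j)) = (\<Sum>i\<in>{1..d}. if i = j then sng j (t j) else 0)"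
      by (intro sum.cong refl) (auto simp: diagm_def)
    also have "\<dots> = sng j (t j)" using True by simp
    finally show ?thesis using True by (simp add: Egl_in Ediag_def del: atLeastAtMost_iff)
  next
    case False then show ?thesis by (simp add: Egl_out Ediag_def del: atLeastAtMost_iff)
  qed
qed

lemma \<sigma>E_Ediag: "\<sigma>E (Ediag c) v = pconst (c (idx v)) * pvar v"
  by (cases v) (simp_all add: Ediag_def linY_single linZ_single)

lemma lookup_lmap_Ediag: "lk (lmap (Ediag c) l) i = c i * lk l i"
proof -
  have "lk (lmap (Ediag c) l) i = (\<Sum>j\<in>ks l. lk l j * (c j when j = i))"
    unfolding lookup_lmap by (simp add: Ediag_def lookup_single)
  also have "\<dots> = (\<Sum>j\<in>ks l. if j = i then c i * lk l i else 0)"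
    by (intro sum.cong refl) (auto simp: when_def)
  also have "\<dots> = c i * lk l i"
    by (auto simp: in_keys_iff)
  finally show ?thesis .
qed

lemma \<sigma>E_diag: "\<sigma>E (Egl d (diagm t)) v = pconst (if idx v \<in> {1..d} then t (idx v) else 1) * pvar v"
  by (simp add: Egl_diag \<sigma>E_Ediag del: atLeastAtMost_iff)

lemma lookup_lmap_diag: "lk (lmap (Egl d (diagm t)) l) i = (if i \<in> {1..d} then t i else 1) * lk l i"
  by (simp add: Egl_diag lookup_lmap_Ediag del: atLeastAtMost_iff)

definition TP :: "'k::comm_ring_1 bic set \<Rightarrow> 'k pol set" where "TP I = {Q. (0, Q) \<in> I}"

lemma closedV_TP:
  fixes I :: "'k::comm_ring_1 bic set"
  assumes "is_T_ideal I" shows "closedV (TP I)"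
proof (rule closedV_intro)
  have sub: "is_subspace I" and id: "\<forall>a\<in>bic_carrier. \<forall>b\<in>I. bic_mul a b \<in> I \<and> bic_mul b a \<in> I"
    using assms by (auto simp: is_T_ideal_def)
  show "0 \<in> TP I" using sub by (simp add: TP_def is_subspace_def bic_zero_def)
  show "x + y \<in> TP I" if "x \<in> TP I" "y \<in> TP I" for x y
    using sub that unfolding TP_def is_subspace_def bic_add_def by force
  show "pconst c * x \<in> TP I" if "x \<in> TP I" for c x
    using sub that unfolding TP_def is_subspace_def bic_smul_def by force
  show "pvar v * x \<in> TP I" if "x \<in> TP I" for v x
  proof (cases v)
    case (Yv i)
    have "bic_mul (bic_x i) (0, x) \<in> I" using id that carrier_x by (auto simp: TP_def)
    then show ?thesis using Yv by (simp add: TP_def bic_mul_def bic_x_def linY_single)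
  next
    case (Zv j)
    have "bic_mul (0, x) (bic_x j) \<in> I" using id that carrier_x by (auto simp: TP_def)
    then show ?thesis using Zv by (simp add: TP_def bic_mul_def bic_x_def linZ_single mult.commute)
  qed
qed

lemma Fd_fix:
  fixes v :: "'k::comm_ring_1 bic"
  assumes "v \<in> Fd d"
  shows "linsub (Ediag (\<lambda>j. if j \<in> {1..d} then 1 else 0)) v = v"
proof -
  let ?h = "linsub (Ediag (\<lambda>j. if j \<in> {1..d} then 1 else (0::'k)))"
  let ?S = "{a \<in> bic_carrier. ?h a = a}"
  have en: "is_endo ?h" by (rule linsub_endo)
  have "is_subspace ?S"
    unfolding is_subspace_def
  proof (intro conjI ballI allI)
    show "?S \<subseteq> bic_carrier" by auto
    show "bic_zero \<in> ?S" using carrier_zero by (simp add: linsub_def bic_zero_def)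
    show "bic_add a b \<in> ?S" if "a \<in> ?S" "b \<in> ?S" for a b
    proof -
      have a: "a \<in> bic_carrier" "?h a = a" and b: "b \<in> bic_carrier" "?h b = b" using that by auto
      have "?h (bic_add a b) = bic_add (?h a) (?h b)" using en a b by (simp add: is_endo_def)
      then show ?thesis using a b carrier_add by simp
    qed
    show "bic_smul c a \<in> ?S" if "a \<in> ?S" for c a
    proof -
      have a: "a \<in> bic_carrier" "?h a = a" using that by auto
      have "?h (bic_smul c a) = bic_smul c (?h a)" using en a by (simp add: is_endo_def)
      then show ?thesis using a carrier_smul by simp
    qed
  qed
  moreover have "\<forall>a\<in>?S. \<forall>b\<in>?S. bic_mul a b \<in> ?S"
  proof (intro ballI)
    fix a b assume "a \<in> ?S" "b \<in> ?S"
    then have a: "a \<in> bic_carrier" "?h a = a" and b: "b \<in> bic_carrier" "?h b = b" by auto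
    have "?h (bic_mul a b) = bic_mul (?h a) (?h b)" using en a b by (simp add: is_endo_def)
    then show "bic_mul a b \<in> ?S" using a b carrier_mul by simp
  qed
  moreover have "\<forall>i\<in>{1..d}. bic_x i \<in> ?S"
  proof
    fix i :: nat assume i: "i \<in> {1..d}"
    have "?h (bic_x i) = (Ediag (\<lambda>j. if j \<in> {1..d} then 1 else (0::'k)) i, 0)" by (rule linsub_x)
    also have "\<dots> = bic_x i" using i by (simp add: Ediag_def bic_x_def)
    finally have "?h (bic_x i) = bic_x i" .
    then show "bic_x i \<in> ?S" using carrier_x by simp
  qed
  ultimately have "Fd d \<subseteq> ?S" unfolding Fd_def by blast
  then show ?thesis using assms by auto
qed

lemma ideal_contains_v:
  fixes f :: "'k::comm_ring_1 bic"
  assumes "irreducible_GL d M" "f \<in> M" "f \<noteq> bic_zero" "is_T_ideal I" "f \<in> I" "v \<in> M"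
  shows "v \<in> I"
proof -
  have subM: "is_subspace M" "M \<subseteq> Fd d" and clM: "\<forall>g h. invertible_mat d g \<and> gl_acts d g h \<longrightarrow> h ` M \<subseteq> M"
    using assms(1) by (auto simp: irreducible_GL_def is_GL_submodule_def)
  have subI: "is_subspace I" and clI: "\<forall>h. is_endo h \<longrightarrow> h ` I \<subseteq> I"
    using assms(4) by (auto simp: is_T_ideal_def)
  have "is_GL_submodule d (I \<inter> M)"
    unfolding is_GL_submodule_def
  proof (intro conjI allI impI)
    show "is_subspace (I \<inter> M)" using subM(1) subI by (auto simp: is_subspace_def)
    show "I \<inter> M \<subseteq> Fd d" using subM(2) by auto
    fix g and h :: "'k bic \<Rightarrow> 'k bic" assume "invertible_mat d g \<and> gl_acts d g h"
    then have "h ` I \<subseteq> I" "h ` M \<subseteq> M" using clM clI by (auto simp: gl_acts_def)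
    then show "h ` (I \<inter> M) \<subseteq> I \<inter> M" by blast
  qed
  then have "I \<inter> M = {bic_zero} \<or> I \<inter> M = M"
    using assms(1) by (auto simp: irreducible_GL_def)
  then show ?thesis using assms by auto
qed


lemma pow2_inj: "(2::'k::field_char_0) ^ x = 2 ^ y \<Longrightarrow> x = y"
proof -
  assume "(2::'k) ^ x = 2 ^ y"
  then have "of_nat (2 ^ x) = (of_nat (2 ^ y) :: 'k)" by simp
  then have "(2::nat) ^ x = 2 ^ y" by (simp only: of_nat_eq_iff)
  then show "x = y" by simp
qed

lemma prod_wdeg: "(\<Prod>u\<in>ks n. (if idx u = i then x else 1) ^ lk n u) = x ^ wdeg i n"
  unfolding wdeg_def power_sum by (intro prod.cong refl) auto

lemma wdeg_zero_D: "wdeg i n = 0 \<Longrightarrow> u \<in> ks n \<Longrightarrow> idx u \<noteq> i"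
proof
  assume w: "wdeg i n = 0" and u: "u \<in> ks n" and e: "idx u = i"
  have "(if idx u = i then lk n u else 0) = 0" using w u unfolding wdeg_def by (simp add: sum_eq_0_iff)
  then show False using e u by (simp add: in_keys_iff)
qed

lemma total_deg:
  assumes "\<forall>u\<in>ks n. idx u = 1 \<or> idx u = 2"
  shows "ydeg n + zdeg n = wdeg 1 n + wdeg 2 n"
proof -
  have "ydeg n + zdeg n = (\<Sum>u\<in>ks n. lk n u)"
    unfolding ydeg_alt zdeg_alt sum.distrib[symmetric]
    by (intro sum.cong refl) (auto simp: yw_def zw_def distrib_right[symmetric] split: var.split)
  also have "\<dots> = wdeg 1 n + wdeg 2 n"
    unfolding wdeg_def sum.distrib[symmetric] using assms by (intro sum.cong refl) auto
  finally show ?thesis .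
qed

lemma prod_delta_pow: "i0 \<in> S \<Longrightarrow> finite S \<Longrightarrow> (\<Prod>i\<in>S. (if i = i0 then x else 1) ^ w i) = x ^ w i0"
proof -
  assume "i0 \<in> S" "finite S"
  then have "(\<Prod>i\<in>S. (if i = i0 then x else 1) ^ w i) = (\<Prod>i\<in>S. if i = i0 then x ^ w i else 1)"
    by (intro prod.cong refl) auto
  then show ?thesis using \<open>i0 \<in> S\<close> \<open>finite S\<close> by simp
qed

lemma Fd_carrier: "Fd d \<subseteq> (bic_carrier :: 'k::comm_ring_1 bic set)"
proof -
  have "is_subspace (bic_carrier :: 'k bic set)"
    by (auto simp: is_subspace_def carrier_zero carrier_add carrier_smul)
  then show ?thesis unfolding Fd_def using carrier_mul carrier_x by blast
qed

lemma weights: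
  fixes v :: "'k::field_char_0 bic"
  assumes hw: "hw_vector d (wt2 a b) v" and Fd: "v \<in> Fd d" and ab: "b \<le> a" "b = 0 \<or> 2 \<le> d"
  shows "(fst v = 0 \<and> snd v \<noteq> 0 \<and> (\<forall>m\<in>ks (snd v). (\<forall>u\<in>ks m. idx u = 1 \<or> idx u = 2) \<and> wdeg 1 m = a \<and> wdeg 2 m = b))
       \<or> (a = 1 \<and> b = 0 \<and> snd v = 0 \<and> (\<exists>j\<in>{1..d}. lk (fst v) j \<noteq> 0))"
proof -
  obtain l P where v: "v = (l, P)" by (cases v)
  have vcar: "v \<in> bic_carrier" using Fd Fd_carrier by blast
  have vnz: "v \<noteq> bic_zero" using hw by (simp add: hw_vector_def)
  define \<kappa> where "\<kappa> = (\<lambda>j. if j \<in> {1..d} then 1 else (0::'k))"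
  have fix1: "linsub (Ediag \<kappa>) v = v" unfolding \<kappa>_def using Fd_fix[OF Fd] .
  have \<sigma>k: "\<sigma>E (Ediag \<kappa>) = (\<lambda>u. pconst (\<kappa> (idx u)) * pvar u)"
    by (simp add: fun_eq_iff \<sigma>E_Ediag)
  have Pidx: "idx u \<in> {1..d}" if "n \<in> ks P" "u \<in> ks n" for n u
  proof (rule ccontr)
    assume nu: "idx u \<notin> {1..d}"
    have "lk P n = lk (ev (\<sigma>E (Ediag \<kappa>)) P) n" using fix1 v by (simp add: linsub_def)
    also have "\<dots> = (\<Prod>u\<in>ks n. \<kappa> (idx u) ^ lk n u) * lk P n"
      unfolding \<sigma>k by (rule lookup_ev_diag)
    also have "(\<Prod>u\<in>ks n. \<kappa> (idx u) ^ lk n u) = 0"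
      using that nu by (intro prod_zero) (auto simp: \<kappa>_def in_keys_iff intro!: bexI[of _ u])
    finally show False using that by (simp add: in_keys_iff)
  qed
  have lidx: "j \<in> {1..d}" if "j \<in> ks l" for j
  proof (rule ccontr)
    assume nj: "j \<notin> {1..d}"
    have "lk l j = lk (lmap (Ediag \<kappa>) l) j" using fix1 v by (simp add: linsub_def)
    also have "\<dots> = 0" using nj by (simp add: lookup_lmap_Ediag \<kappa>_def del: atLeastAtMost_iff)
    finally show False using that by (simp add: in_keys_iff)
  qed
  have tor: "(\<forall>n\<in>ks P. wdeg i0 n = wt2 a b i0) \<and> (\<forall>j\<in>ks l. (if j = i0 then 2 else 1) = (2::'k) ^ wt2 a b i0)"
    if i0: "i0 \<in> {1..d}" for i0
  proof -
    define t where "t i = (if i = i0 then 2 else (1::'k))" for i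
    have tnz: "\<forall>i\<in>{1..d}. t i \<noteq> 0" by (simp add: t_def)
    have "gl_acts d (\<lambda>i j. if i = j then t i else 0) (linsub (Egl d (diagm t)))"
      using gl_acts_Egl[of d "diagm t"] by (simp add: diagm_def[abs_def])
    then have eq: "linsub (Egl d (diagm t)) v = bic_smul (\<Prod>i\<in>{1..d}. t i ^ wt2 a b i) v"
      using hw tnz unfolding hw_vector_def by blast
    have K: "(\<Prod>i\<in>{1..d}. t i ^ wt2 a b i) = 2 ^ wt2 a b i0"
      unfolding t_def using i0 by (intro prod_delta_pow) auto
    have c1: "\<forall>n\<in>ks P. wdeg i0 n = wt2 a b i0"
    proof
      fix n assume n: "n \<in> ks P"
      have "lk (ev (\<sigma>E (Egl d (diagm t))) P) n = lk (pconst (2 ^ wt2 a b i0) * P) n"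
        using eq K v by (simp add: linsub_def bic_smul_def)
      moreover have "\<sigma>E (Egl d (diagm t)) = (\<lambda>u. pconst (if idx u \<in> {1..d} then t (idx u) else 1) * pvar u)"
        by (simp add: fun_eq_iff \<sigma>E_diag)
      ultimately have "(\<Prod>u\<in>ks n. (if idx u \<in> {1..d} then t (idx u) else 1) ^ lk n u) * lk P n = 2 ^ wt2 a b i0 * lk P n"
        by (simp add: lookup_ev_diag lookup_pconst_mult)
      moreover have "(\<Prod>u\<in>ks n. (if idx u \<in> {1..d} then t (idx u) else 1) ^ lk n u) = (\<Prod>u\<in>ks n. (if idx u = i0 then 2 else 1) ^ lk n u)"
        using Pidx[OF n] by (intro prod.cong refl) (simp add: t_def)
      ultimately have "(2::'k) ^ wdeg i0 n = 2 ^ wt2 a b i0"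
        using n by (simp add: prod_wdeg in_keys_iff)
      then show "wdeg i0 n = wt2 a b i0" by (rule pow2_inj)
    qed
    have c2: "\<forall>j\<in>ks l. (if j = i0 then 2 else 1) = (2::'k) ^ wt2 a b i0"
    proof
      fix j assume j: "j \<in> ks l"
      have "lk (lmap (Egl d (diagm t)) l) j = lk (scal (2 ^ wt2 a b i0) l) j"
        using eq K v by (simp add: linsub_def bic_smul_def)
      then have "(if j \<in> {1..d} then t j else 1) * lk l j = 2 ^ wt2 a b i0 * lk l j"
        by (simp add: lookup_lmap_diag)
      then show "(if j = i0 then 2 else 1) = (2::'k) ^ wt2 a b i0"
        using j lidx[OF j] by (simp add: t_def in_keys_iff)
    qed
    show ?thesis using c1 c2 by blast
  qed
  have shape: "(\<forall>u\<in>ks n. idx u = 1 \<or> idx u = 2) \<and> wdeg 1 n = a \<and> wdeg 2 n = b" if n: "n \<in> ks P" for n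
  proof -
    have ncar: "0 < ydeg n" using vcar v n by (auto simp: bic_carrier_def)
    then obtain i where i: "Yv i \<in> ks n" using ydeg_pos_ex by blast
    have d1: "1 \<le> d" using Pidx[OF n i] by simp
    have u12: "idx u = 1 \<or> idx u = 2" if u: "u \<in> ks n" for u
    proof (rule ccontr)
      assume "\<not> (idx u = 1 \<or> idx u = 2)"
      moreover have iu: "idx u \<in> {1..d}" using Pidx[OF n u] .
      ultimately have "wt2 a b (idx u) = 0" by (auto simp: wt2_def)
      then have "wdeg (idx u) n = 0" using tor[OF iu] n by simp
      then show False using wdeg_zero_D u by blast
    qed
    have w1: "wdeg 1 n = a" using tor[of 1] d1 n by (simp add: wt2_def)
    have w2: "wdeg 2 n = b"
    proof (cases "2 \<le> d")
      case True then show ?thesis using tor[of 2] n by (simp add: wt2_def)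
    next
      case False
      then have "b = 0" using ab by simp
      moreover have "idx u \<noteq> 2" if "u \<in> ks n" for u using Pidx[OF n that] False by auto
      moreover have "wdeg 2 n = 0" unfolding wdeg_def using calculation(2) by (intro sum.neutral) auto
      ultimately show ?thesis by simp
    qed
    show ?thesis using u12 w1 w2 by blast
  qed
  show ?thesis
  proof (cases "l = 0")
    case True
    then have "P \<noteq> 0" using vnz v by (simp add: bic_zero_def)
    then show ?thesis using True shape v by auto
  next
    case False
    then obtain j where j: "j \<in> ks l" by (metis keys_eq_empty ex_in_conv)
    have jd: "j \<in> {1..d}" by (rule lidx[OF j])
    have wj: "wt2 a b j = 1"
    proof -
      have "(2::'k) = 2 ^ wt2 a b j" using tor[OF jd] j by auto
      then have "(2::'k) ^ 1 = 2 ^ wt2 a b j" by simp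
      then show ?thesis using pow2_inj by metis
    qed
    have w0: "wt2 a b i = 0" if "i \<in> {1..d}" "i \<noteq> j" for i
    proof -
      have "(1::'k) = 2 ^ wt2 a b i" using tor[OF that(1)] j that(2) by auto
      then have "(2::'k) ^ 0 = 2 ^ wt2 a b i" by simp
      then show ?thesis using pow2_inj by metis
    qed
    have a1: "a = 1 \<and> b = 0"
    proof -
      consider "j = 1" | "j = 2" | "j \<noteq> 1 \<and> j \<noteq> 2" by blast
      then show ?thesis
      proof cases
        case 1
        then have "a = 1" using wj by (simp add: wt2_def)
        moreover have "b = 0"
        proof (cases "2 \<le> d")
          case True then show ?thesis using w0[of 2] 1 by (simp add: wt2_def)
        next
          case False then show ?thesis using ab by simp
        qed
        ultimately show ?thesis by simp
      next
        case 2
        then have "b = 1" using wj by (simp add: wt2_def)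
        moreover have "a = 0" using w0[of 1] 2 jd by (simp add: wt2_def)
        ultimately show ?thesis using ab by simp
      next
        case 3 then show ?thesis using wj by (simp add: wt2_def)
      qed
    qed
    have "P = 0"
    proof (rule ccontr)
      assume "P \<noteq> 0"
      then obtain n where n: "n \<in> ks P" by (metis keys_eq_empty ex_in_conv)
      have "ydeg n + zdeg n = 1" using total_deg[of n] shape[OF n] a1 by simp
      moreover have "0 < ydeg n" "0 < zdeg n" using vcar v n by (auto simp: bic_carrier_def)
      ultimately show False by simp
    qed
    then show ?thesis using a1 v jd j by (auto simp: in_keys_iff)
  qed
qed


abbreviation Dp :: "'k::comm_ring_1 pol" where "Dp \<equiv> yy 1 * zz 2 - yy 2 * zz 1"

lemma idx_eq_iff: "idx u = i \<longleftrightarrow> u = Yv i \<or> u = Zv i"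
  by (cases u) auto

lemma Dp_nz: "(Dp :: 'k::field pol) \<noteq> 0"
proof
  assume "(Dp :: 'k pol) = 0"
  then have "ev (\<lambda>u. pconst (if u = Yv 1 \<or> u = Zv 2 then 1 else 0)) (Dp :: 'k pol) = 0" by simp
  then show False by (simp add: ev_simps)
qed

lemma vars_sub:
  assumes "\<forall>m\<in>ks P. \<forall>u\<in>ks m. u \<in> U" shows "vars P \<subseteq> U"
  using assms by (auto simp: vars_def)

lemma exact_form:
  fixes P :: "'k::field_char_0 pol"
  assumes shape: "\<forall>m\<in>ks P. (\<forall>u\<in>ks m. idx u = 1 \<or> idx u = 2) \<and> wdeg 1 m = a \<and> wdeg 2 m = b"
    and unip: "0 < b \<Longrightarrow> \<forall>s. ev (pvar(Yv 2 := yy 2 + pconst s * yy 1, Zv 2 := zz 2 + pconst s * zz 1)) P = P"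
  shows "\<exists>p. P = Dp ^ b * p"
proof (cases "b = 0")
  case True then show ?thesis by (intro exI[of _ P]) simp
next
  case False
  then have unip: "\<And>s. ev (pvar(Yv 2 := yy 2 + pconst s * yy 1, Zv 2 := zz 2 + pconst s * zz 1)) P = P"
    using unip by blast
  have varsP: "vars P \<subseteq> {Yv 1, Zv 1, Yv 2, Zv 2}"
    using shape by (intro vars_sub) (auto simp: idx_eq_iff)
  define \<mu> where "\<mu> A B = pvar(Yv 2 := A * yy 2 + B * yy 1, Zv 2 := A * zz 2 + B * zz 1)" for A B :: "'k pol"
  have homog2: "ev (\<lambda>u. if idx u = 2 then L * pvar u else pvar u) P = L ^ b * P" for L
    using ev_homog[of 2 "\<lambda>u. if idx u = 2 then L * pvar u else pvar u" L pvar P b] shape by auto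
  have G: "ev (\<mu> A B) P = A ^ b * P" if B: "\<And>X. ev (pvar(Yv 0 := X)) B = B" for A B
  proof -
    define \<Phi> where "\<Phi> = ev (\<mu> (pvar (Yv 0)) (pvar (Zv 0))) P - pvar (Yv 0) ^ b * P"
    have P0: "ev \<sigma> P = P" if "\<And>u. u \<in> {Yv 1, Zv 1, Yv 2, Zv 2} \<Longrightarrow> \<sigma> u = pvar u" for \<sigma>
      using ev_cong_on[OF varsP, of \<sigma> pvar] that by simp
    have "ev (pvar(Yv 0 := A)) (ev (pvar(Zv 0 := B)) \<Phi>) \<in> {0}"
    proof (rule twovar[OF closedV_zero_set])
      show "Yv 0 \<noteq> Zv 0" by simp
      show "ev (pvar(Yv 0 := X)) B = B" for X by (rule B)
      fix s1 s2 :: 'k assume s: "s1 \<noteq> 0" "s2 \<noteq> 0"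
      have e1: "ev (pvar(Zv 0 := pconst s2)) (ev (pvar(Yv 0 := pconst s1)) (ev (\<mu> (pvar (Yv 0)) (pvar (Zv 0))) P))
          = ev (\<lambda>u. if idx u = 2 then pconst s1 * pvar u else pvar u)
              (ev (pvar(Yv 2 := yy 2 + pconst s2 * yy 1, Zv 2 := zz 2 + pconst s2 * zz 1)) P)"
        unfolding ev_comp by (intro ev_cong_on[OF varsP]) (auto simp: \<mu>_def ev_simps)
      have e2: "ev (pvar(Zv 0 := pconst s2)) (ev (pvar(Yv 0 := pconst s1)) P) = P"
        unfolding ev_comp by (intro P0) auto
      have e1': "ev (pvar(Zv 0 := pconst s2)) (ev (pvar(Yv 0 := pconst s1)) (ev (\<mu> (pvar (Yv 0)) (pvar (Zv 0))) P))
          = pconst s1 ^ b * P"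
        unfolding e1 unip by (rule homog2)
      have e3: "ev (pvar(Zv 0 := pconst s2)) (ev (pvar(Yv 0 := pconst s1)) (pvar (Yv 0) ^ b * P)) = pconst s1 ^ b * P"
        using e2 by (simp add: ev_mult ev_power)
      show "ev (pvar(Zv 0 := pconst s2)) (ev (pvar(Yv 0 := pconst s1)) \<Phi>) \<in> {0}"
        unfolding \<Phi>_def ev_diff e1' e3 by simp
    qed
    moreover have "ev (pvar(Yv 0 := A)) (ev (pvar(Zv 0 := B)) (ev (\<mu> (pvar (Yv 0)) (pvar (Zv 0))) P)) = ev (\<mu> A B) P"
      unfolding ev_comp by (intro ev_cong_on[OF varsP]) (auto simp: \<mu>_def ev_simps B)
    moreover have "ev (pvar(Yv 0 := A)) (ev (pvar(Zv 0 := B)) P) = P"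
      unfolding ev_comp by (intro P0) auto
    ultimately show ?thesis unfolding \<Phi>_def by (simp add: ev_simps)
  qed
  define \<nu>1 where "\<nu>1 = (\<lambda>u. if u = Yv 2 then 0 else if u = Zv 2 then 1 else (pvar u :: 'k pol))"
  define \<nu>2 where "\<nu>2 = (\<lambda>u. if u = Yv 2 then 1 else if u = Zv 2 then 0 else (pvar u :: 'k pol))"
  have e1: "yy 1 ^ b * P = Dp ^ b * ev \<nu>1 P"
  proof -
    have "yy 1 ^ b * P = ev (\<mu> (yy 1) (- yy 2)) P" by (rule G[symmetric]) (simp add: ev_simps)
    also have "\<dots> = ev (\<lambda>u. if idx u = 2 then Dp * \<nu>1 u else \<nu>1 u) P"
    proof (rule ev_cong_on[OF varsP])
      fix u :: var assume "u \<in> {Yv 1, Zv 1, Yv 2, Zv 2}"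
      then show "\<mu> (yy 1) (- yy 2) u = (if idx u = 2 then Dp * \<nu>1 u else \<nu>1 u)"
        by (elim insertE emptyE) (simp_all add: \<mu>_def \<nu>1_def algebra_simps)
    qed
    also have "\<dots> = Dp ^ b * ev \<nu>1 P"
      using shape by (intro ev_homog) auto
    finally show ?thesis .
  qed
  have e2: "zz 1 ^ b * P = (- Dp) ^ b * ev \<nu>2 P"
  proof -
    have "zz 1 ^ b * P = ev (\<mu> (zz 1) (- zz 2)) P" by (rule G[symmetric]) (simp add: ev_simps)
    also have "\<dots> = ev (\<lambda>u. if idx u = 2 then (- Dp) * \<nu>2 u else \<nu>2 u) P"
    proof (rule ev_cong_on[OF varsP])
      fix u :: var assume "u \<in> {Yv 1, Zv 1, Yv 2, Zv 2}"
      then show "\<mu> (zz 1) (- zz 2) u = (if idx u = 2 then (- Dp) * \<nu>2 u else \<nu>2 u)"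
        by (elim insertE emptyE) (simp_all add: \<mu>_def \<nu>2_def algebra_simps)
    qed
    also have "\<dots> = (- Dp) ^ b * ev \<nu>2 P"
      using shape by (intro ev_homog) auto
    finally show ?thesis .
  qed
  define q1 where "q1 = ev \<nu>1 P"
  define q2 where "q2 = ev \<nu>2 P"
  define c where "c = ((-1::'k) ^ b)"
  have Dnz: "Dp ^ b \<noteq> (0 :: 'k pol)" by (intro power_not_zero Dp_nz)
  have negD: "(- Dp) ^ b = pconst c * Dp ^ b"
    unfolding c_def by (simp only: power_minus[of Dp] pconst_power pconst_uminus pconst_1)
  have s1: "zz 1 ^ b * (yy 1 ^ b * P) = Dp ^ b * (zz 1 ^ b * q1)"
    unfolding e1 q1_def by (rule mult.left_commute)
  have s2: "yy 1 ^ b * (zz 1 ^ b * P) = Dp ^ b * (pconst c * yy 1 ^ b * q2)"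
    unfolding e2 q2_def negD by (simp only: mult_ac)
  have "Dp ^ b * (zz 1 ^ b * q1) = Dp ^ b * (pconst c * yy 1 ^ b * q2)"
    using trans[OF trans[OF s1[symmetric] mult.left_commute[of "zz 1 ^ b" "yy 1 ^ b" P]] s2] .
  then have eq: "zz 1 ^ b * q1 = pconst c * yy 1 ^ b * q2" using mult_left_cancel[OF Dnz] by blast
  have zpow: "zz 1 ^ b = (sng (sng (Zv 1) b) 1 :: 'k pol)" by (rule pvar_power)
  have ypow: "yy 1 ^ b = (sng (sng (Yv 1) b) 1 :: 'k pol)" by (rule pvar_power)
  have key: "b \<le> lk m (Yv 1)" if m: "m \<in> ks q1" for m
  proof -
    have "lk (zz 1 ^ b * q1) (sng (Zv 1) b + m) = lk q1 m"
      unfolding zpow by (simp add: lookup_single_mult)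
    moreover have cy: "pconst c * yy 1 ^ b = (sng (sng (Yv 1) b) c :: 'k pol)"
      unfolding ypow by (simp add: pconst_single)
    ultimately have "lk (sng (sng (Yv 1) b) c * q2) (sng (Zv 1) b + m) = lk q1 m"
      using eq[unfolded cy] by simp
    then have "sng (Zv 1) b + m \<in> ks (sng (sng (Yv 1) b) c * q2)"
      using m by (simp add: in_keys_iff)
    then obtain r where "sng (Zv 1) b + m = sng (Yv 1) b + r"
      using keys_single_mult by blast
    then have "lk (sng (Zv 1) b + m) (Yv 1) = lk (sng (Yv 1) b + r) (Yv 1)" by simp
    then show ?thesis by (simp add: lookup_add lookup_single when_def)
  qed
  have injk: "inj (\<lambda>n. sng (Yv 1) b + n)" by (rule injI) simp
  define p where "p = Poly_Mapping.map_key (\<lambda>n. sng (Yv 1) b + n) q1"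
  have lkp: "lk p n = lk q1 (sng (Yv 1) b + n)" for n
    using injk by (simp add: p_def Poly_Mapping.map_key.rep_eq)
  have q1p: "q1 = yy 1 ^ b * p"
  proof (rule poly_mapping_eqI)
    fix m
    show "lk q1 m = lk (yy 1 ^ b * p) m"
    proof (cases "b \<le> lk m (Yv 1)")
      case True
      define n where "n = m - sng (Yv 1) b"
      have mn: "m = sng (Yv 1) b + n"
        by (rule poly_mapping_eqI) (use True in \<open>auto simp: n_def lookup_add lookup_minus lookup_single when_def\<close>)
      show ?thesis unfolding ypow mn by (simp add: lookup_single_mult lkp)
    next
      case False
      then have "lk q1 m = 0" using key by (auto simp: in_keys_iff)
      moreover have "m \<notin> ks (yy 1 ^ b * p)"
      proof
        assume "m \<in> ks (yy 1 ^ b * p)"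
        then obtain r where "m = sng (Yv 1) b + r" using keys_single_mult[of "sng (Yv 1) b" 1 p] ypow by auto
        then show False using False by (simp add: lookup_add)
      qed
      ultimately show ?thesis by (simp add: in_keys_iff)
    qed
  qed
  have "yy 1 ^ b * P = yy 1 ^ b * (Dp ^ b * p)" using e1 q1p by (simp add: q1_def mult_ac)
  moreover have "yy 1 ^ b \<noteq> (0 :: 'k pol)" unfolding ypow by (metis lookup_single_eq lookup_zero zero_neq_one)
  ultimately have "P = Dp ^ b * p" using mult_left_cancel by blast
  then show ?thesis by blast
qed


lemma lookup_diag_id:
  assumes "\<And>n u. n \<in> ks P \<Longrightarrow> u \<in> ks n \<Longrightarrow> c u = 1"
  shows "ev (\<lambda>u. pconst (c u) * pvar u) P = (P :: 'k::comm_ring_1 pol)"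
proof (rule poly_mapping_eqI)
  fix n
  show "lk (ev (\<lambda>u. pconst (c u) * pvar u) P) n = lk P n"
  proof (cases "n \<in> ks P")
    case True
    then have "(\<Prod>u\<in>ks n. c u ^ lk n u) = 1" using assms by (intro prod.neutral) auto
    then show ?thesis by (simp add: lookup_ev_diag)
  next
    case False then show ?thesis by (simp add: lookup_ev_diag in_keys_iff)
  qed
qed

lemma p_props:
  fixes P p :: "'k::field_char_0 pol"
  assumes shape: "\<forall>m\<in>ks P. (\<forall>u\<in>ks m. idx u = 1 \<or> idx u = 2) \<and> wdeg 1 m = a \<and> wdeg 2 m = b"
    and Pp: "P = Dp ^ b * p" and ab: "b \<le> a"
  shows "\<forall>m\<in>ks p. (\<forall>u\<in>ks m. idx u = 1) \<and> wdeg 1 m = a - b"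
proof -
  have Dnz: "Dp ^ b \<noteq> (0 :: 'k pol)" by (intro power_not_zero Dp_nz)
  have two: "pconst (2::'k) \<noteq> 0" using pconst_inj[of "2::'k" 0] by simp
  define \<kappa> where "\<kappa> = (\<lambda>u. if idx u = 1 \<or> idx u = 2 then (1::'k) else 0)"
  have kP: "ev (\<lambda>u. pconst (\<kappa> u) * pvar u) P = P"
    using shape by (intro lookup_diag_id) (auto simp: \<kappa>_def)
  have kD: "ev (\<lambda>u. pconst (\<kappa> u) * pvar u) Dp = (Dp :: 'k pol)"
    by (simp add: ev_simps \<kappa>_def)
  have kp: "ev (\<lambda>u. pconst (\<kappa> u) * pvar u) p = p"
  proof -
    have "Dp ^ b * ev (\<lambda>u. pconst (\<kappa> u) * pvar u) p = Dp ^ b * p"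
      using kP unfolding Pp ev_mult ev_power kD .
    then show ?thesis using mult_left_cancel[OF Dnz] by blast
  qed
  have idx12: "idx u = 1 \<or> idx u = 2" if n: "n \<in> ks p" and u: "u \<in> ks n" for n u
  proof (rule ccontr)
    assume nu: "\<not> (idx u = 1 \<or> idx u = 2)"
    have "lk p n = (\<Prod>u\<in>ks n. \<kappa> u ^ lk n u) * lk p n"
      using kp lookup_ev_diag[of \<kappa> p n] by simp
    also have "(\<Prod>u\<in>ks n. \<kappa> u ^ lk n u) = 0"
      using u nu by (intro prod_zero) (auto simp: \<kappa>_def in_keys_iff intro!: bexI[of _ u])
    finally show False using n by (simp add: in_keys_iff)
  qed
  define c where "c i = (\<lambda>u. if idx u = i then (2::'k) else 1)" for i
  have cP: "ev (\<lambda>u. pconst (c i u) * pvar u) P = pconst 2 ^ wdeg_val * P"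
    if "\<forall>m\<in>ks P. wdeg i m = wdeg_val" for i wdeg_val
    using ev_homog[of i "\<lambda>u. pconst (c i u) * pvar u" "pconst 2" pvar P wdeg_val] that
    by (auto simp: c_def)
  have cD: "ev (\<lambda>u. pconst (c i u) * pvar u) Dp = pconst 2 * (Dp :: 'k pol)" if "i = 1 \<or> i = 2" for i
    using that by (auto simp: ev_simps c_def algebra_simps)
  have cp: "Dp ^ b * ev (\<lambda>u. pconst (c i u) * pvar u) p = pconst 2 ^ (wv - b) * (Dp ^ b * p)"
    if "i = 1 \<or> i = 2" "\<forall>m\<in>ks P. wdeg i m = wv" "b \<le> wv" for i wv
  proof -
    have "pconst 2 ^ b * (Dp ^ b * ev (\<lambda>u. pconst (c i u) * pvar u) p) = pconst 2 ^ wv * (Dp ^ b * p)"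
      using cP[OF that(2)] unfolding Pp ev_mult ev_power cD[OF that(1)]
      by (simp add: power_mult_distrib mult.assoc)
    also have "pconst 2 ^ wv = pconst 2 ^ b * (pconst (2::'k) ^ (wv - b) :: 'k pol)"
      using that(3) by (simp add: power_add[symmetric])
    finally show ?thesis using mult_left_cancel[of "pconst 2 ^ b"] two by (simp add: mult.assoc)
  qed
  have w2: "wdeg 2 n = 0" if n: "n \<in> ks p" for n
  proof -
    have "Dp ^ b * ev (\<lambda>u. pconst (c 2 u) * pvar u) p = Dp ^ b * p"
      using cp[of 2 b] shape by simp
    then have e: "ev (\<lambda>u. pconst (c 2 u) * pvar u) p = p" using mult_left_cancel[OF Dnz] by blast
    have "lk p n = (\<Prod>u\<in>ks n. c 2 u ^ lk n u) * lk p n"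
      using e lookup_ev_diag[of "c 2" p n] by simp
    then have "(2::'k) ^ wdeg 2 n = 2 ^ 0" using n by (simp add: c_def prod_wdeg in_keys_iff)
    then show ?thesis using pow2_inj by metis
  qed
  have w1: "wdeg 1 n = a - b" if n: "n \<in> ks p" for n
  proof -
    have "Dp ^ b * ev (\<lambda>u. pconst (c 1 u) * pvar u) p = Dp ^ b * (pconst 2 ^ (a - b) * p)"
      using cp[of 1 a] shape ab by (simp add: mult_ac)
    then have e: "ev (\<lambda>u. pconst (c 1 u) * pvar u) p = pconst 2 ^ (a - b) * p"
      using mult_left_cancel[OF Dnz] by blast
    have "(\<Prod>u\<in>ks n. c 1 u ^ lk n u) * lk p n = 2 ^ (a - b) * lk p n"
      using e lookup_ev_diag[of "c 1" p n] by (simp add: pconst_power[symmetric] lookup_pconst_mult) metis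
    then have "(2::'k) ^ wdeg 1 n = 2 ^ (a - b)" using n by (simp add: c_def prod_wdeg in_keys_iff)
    then show ?thesis using pow2_inj by metis
  qed
  show ?thesis
  proof (intro ballI conjI)
    fix m u assume m: "m \<in> ks p" and u: "u \<in> ks m"
    show "idx u = 1" using idx12[OF m u] wdeg_zero_D[OF w2[OF m] u] by blast
  next
    fix m assume "m \<in> ks p" then show "wdeg 1 m = a - b" by (rule w1)
  qed
qed

lemma endgame:
  fixes p :: "'k::field_char_0 pol"
  assumes V: "closedV V" and pnz: "p \<noteq> 0"
    and pp: "\<forall>m\<in>ks p. (\<forall>u\<in>ks m. idx u = 1) \<and> wdeg 1 m = k"
    and H: "\<And>s1 s2. s1 \<noteq> 0 \<Longrightarrow> s2 \<noteq> 0 \<Longrightarrow>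
      Dp ^ b * ev (pvar(Yv 1 := pconst s1 * yy 1 + pconst s2 * yy 2, Zv 1 := pconst s1 * zz 1 + pconst s2 * zz 2)) p \<in> V"
  shows "Dp ^ (b + k) \<in> V"
proof -
  have varsp: "vars p \<subseteq> {Yv 1, Zv 1}"
    using pp by (intro vars_sub) (auto simp: idx_eq_iff)
  obtain c1 c2 :: 'k where c12: "c1 \<noteq> 0" "c2 \<noteq> 0"
    and nz: "ev (pvar(Zv 1 := pconst c2)) (ev (pvar(Yv 1 := pconst c1)) p) \<noteq> 0"
  proof -
    have "\<exists>c1 c2. c1 \<noteq> 0 \<and> c2 \<noteq> 0 \<and> ev (pvar(Zv 1 := pconst c2)) (ev (pvar(Yv 1 := pconst (c1::'k))) p) \<noteq> 0"
    proof (rule ccontr)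
      assume neg: "\<not> ?thesis"
      have "ev (pvar(Yv 1 := yy 1)) (ev (pvar(Zv 1 := zz 1)) p) \<in> {0}"
      proof (rule twovar[OF closedV_zero_set])
        show "Yv 1 \<noteq> Zv 1" by simp
        show "ev (pvar(Yv 1 := X)) (zz 1) = zz 1" for X by simp
        fix s1 s2 :: 'k assume "s1 \<noteq> 0" "s2 \<noteq> 0"
        then show "ev (pvar(Zv 1 := pconst s2)) (ev (pvar(Yv 1 := pconst s1)) p) \<in> {0}"
          using neg by blast
      qed
      then show False using pnz by simp
    qed
    then show ?thesis using that by blast
  qed
  define \<kappa> where "\<kappa> = (\<lambda>u. if u = Yv 1 then c1 else if u = Zv 1 then c2 else 0)"
  define \<gamma> where "\<gamma> = (\<Sum>m\<in>ks p. lk p m * (\<Prod>v\<in>ks m. \<kappa> v ^ lk m v))"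
  have c\<gamma>: "ev (\<lambda>u. pconst (\<kappa> u)) p = pconst \<gamma>" unfolding \<gamma>_def by (rule ev_const)
  have E1: "ev (pvar(Zv 1 := pconst c2)) (ev (pvar(Yv 1 := pconst c1)) p) = ev (\<lambda>u. pconst (\<kappa> u)) p"
    unfolding ev_comp by (rule ev_cong_on[OF varsp]) (auto simp: \<kappa>_def)
  have \<gamma>nz: "\<gamma> \<noteq> 0" using nz unfolding E1 c\<gamma> by auto
  define \<theta> :: "var \<Rightarrow> 'k pol" where "\<theta> = pvar(Yv 1 := pvar (Yv 0) * yy 1 + pvar (Zv 0) * yy 2, Zv 1 := pvar (Yv 0) * zz 1 + pvar (Zv 0) * zz 2)"
  define \<Psi> where "\<Psi> = Dp ^ b * ev \<theta> p"
  define A where "A = pconst c1 * zz 2 - pconst c2 * (yy 2 :: 'k pol)"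
  define B where "B = pconst c2 * yy 1 - pconst c1 * (zz 1 :: 'k pol)"
  have "ev (pvar(Yv 0 := A)) (ev (pvar(Zv 0 := B)) \<Psi>) \<in> V"
  proof (rule twovar[OF V])
    show "Yv 0 \<noteq> Zv 0" by simp
    show "ev (pvar(Yv 0 := X)) B = B" for X by (simp add: B_def ev_simps)
    fix s1 s2 :: 'k assume s: "s1 \<noteq> 0" "s2 \<noteq> 0"
    have "ev (pvar(Zv 0 := pconst s2)) (ev (pvar(Yv 0 := pconst s1)) (ev \<theta> p))
        = ev (\<lambda>u. ev (pvar(Zv 0 := pconst s2)) (ev (pvar(Yv 0 := pconst s1)) (\<theta> u))) p"
      by (simp only: ev_comp)
    also have "\<dots> = ev (pvar(Yv 1 := pconst s1 * yy 1 + pconst s2 * yy 2, Zv 1 := pconst s1 * zz 1 + pconst s2 * zz 2)) p"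
    proof (rule ev_cong_on[OF varsp])
      fix u :: var assume "u \<in> {Yv 1, Zv 1}"
      then show "ev (pvar(Zv 0 := pconst s2)) (ev (pvar(Yv 0 := pconst s1)) (\<theta> u))
          = (pvar(Yv 1 := pconst s1 * yy 1 + pconst s2 * yy 2, Zv 1 := pconst s1 * zz 1 + pconst s2 * zz 2)) u"
        by (elim insertE emptyE) (simp_all add: \<theta>_def ev_simps)
    qed
    finally have X: "ev (pvar(Zv 0 := pconst s2)) (ev (pvar(Yv 0 := pconst s1)) (ev \<theta> p))
        = ev (pvar(Yv 1 := pconst s1 * yy 1 + pconst s2 * yy 2, Zv 1 := pconst s1 * zz 1 + pconst s2 * zz 2)) p" .
    have Dfix: "ev (pvar(Zv 0 := pconst s2)) (ev (pvar(Yv 0 := pconst s1)) Dp) = Dp" by (simp add: ev_simps)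
    show "ev (pvar(Zv 0 := pconst s2)) (ev (pvar(Yv 0 := pconst s1)) \<Psi>) \<in> V"
      using H[OF s] unfolding \<Psi>_def ev_mult ev_power Dfix X .
  qed
  moreover have "ev (pvar(Yv 0 := A)) (ev (pvar(Zv 0 := B)) \<Psi>) = Dp ^ b * (Dp ^ k * pconst \<gamma>)"
  proof -
    define \<theta>2 where "\<theta>2 = (\<lambda>u. if u = Yv 1 then Dp * pconst c1 else if u = Zv 1 then Dp * pconst c2 else (pvar u :: 'k pol))"
    define \<sigma>' where "\<sigma>' = (\<lambda>u. if u = Yv 1 then pconst c1 else if u = Zv 1 then pconst c2 else (pvar u :: 'k pol))"
    have "ev (pvar(Yv 0 := A)) (ev (pvar(Zv 0 := B)) (ev \<theta> p)) = ev (\<lambda>u. ev (pvar(Yv 0 := A)) (ev (pvar(Zv 0 := B)) (\<theta> u))) p"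
      by (simp only: ev_comp)
    also have "\<dots> = ev \<theta>2 p"
    proof (rule ev_cong_on[OF varsp])
      fix u :: var assume "u \<in> {Yv 1, Zv 1}"
      then consider "u = Yv 1" | "u = Zv 1" by blast
      then show "ev (pvar(Yv 0 := A)) (ev (pvar(Zv 0 := B)) (\<theta> u)) = \<theta>2 u"
      proof cases
        case 1
        have "ev (pvar(Yv 0 := A)) (ev (pvar(Zv 0 := B)) (\<theta> (Yv 1))) = A * yy 1 + B * yy 2"
          by (simp add: \<theta>_def ev_simps B_def)
        also have "\<dots> = Dp * pconst c1" unfolding A_def B_def by (simp add: algebra_simps)
        finally show ?thesis using 1 by (simp add: \<theta>2_def)
      next
        case 2
        have "ev (pvar(Yv 0 := A)) (ev (pvar(Zv 0 := B)) (\<theta> (Zv 1))) = A * zz 1 + B * zz 2"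
          by (simp add: \<theta>_def ev_simps B_def)
        also have "\<dots> = Dp * pconst c2" unfolding A_def B_def by (simp add: algebra_simps)
        finally show ?thesis using 2 by (simp add: \<theta>2_def)
      qed
    qed
    also have "\<dots> = Dp ^ k * ev \<sigma>' p"
      using pp by (intro ev_homog) (auto simp: \<theta>2_def \<sigma>'_def idx_eq_iff)
    also have "ev \<sigma>' p = ev (\<lambda>u. pconst (\<kappa> u)) p"
      by (rule ev_cong_on[OF varsp]) (auto simp: \<sigma>'_def \<kappa>_def)
    finally have X: "ev (pvar(Yv 0 := A)) (ev (pvar(Zv 0 := B)) (ev \<theta> p)) = Dp ^ k * pconst \<gamma>"
      unfolding c\<gamma> .
    have Dfix: "ev (pvar(Yv 0 := A)) (ev (pvar(Zv 0 := B)) Dp) = Dp" by (simp add: ev_simps)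
    show ?thesis unfolding \<Psi>_def ev_mult ev_power Dfix X ..
  qed
  ultimately have "Dp ^ b * (Dp ^ k * pconst \<gamma>) \<in> V" by simp
  then have "pconst (1 / \<gamma>) * (Dp ^ b * (Dp ^ k * pconst \<gamma>)) \<in> V" by (rule closedV_mult[OF V])
  moreover have "pconst (1 / \<gamma>) * (Dp ^ b * (Dp ^ k * pconst \<gamma>)) = Dp ^ (b + k)"
  proof -
    have "pconst (1 / \<gamma>) * (Dp ^ b * (Dp ^ k * pconst \<gamma>)) = pconst (1 / \<gamma> * \<gamma>) * (Dp ^ b * Dp ^ k)"
      by (simp only: pconst_mult mult_ac)
    also have "\<dots> = Dp ^ (b + k)" using \<gamma>nz by (simp add: power_add)
    finally show ?thesis .
  qed
  ultimately show ?thesis by simp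
qed


lemma sum_two_pconst:
  assumes "i1 \<in> S" "i2 \<in> S" "i1 \<noteq> i2" "finite S"
  shows "(\<Sum>i\<in>S. pconst (if i = i2 then x else if i = i1 then y else 0) * (f i :: 'k::comm_ring_1 pol))
       = pconst x * f i2 + pconst y * f i1"
proof -
  have "(\<Sum>i\<in>S. pconst (if i = i2 then x else if i = i1 then y else 0) * f i)
      = (\<Sum>i\<in>S. pconst (if i = i2 then (\<lambda>_. x) i else 0) * f i + pconst (if i = i1 then (\<lambda>_. y) i else 0) * f i)"
    using assms(3) by (intro sum.cong refl) (auto simp: distrib_right)
  also have "\<dots> = pconst x * f i2 + pconst y * f i1"
    using assms by (simp only: sum.distrib sum_delta_pconst)
  finally show ?thesis .
qed

lemma main_I:
  fixes v :: "'k::field_char_0 bic"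
  assumes TI: "is_T_ideal I" and vI: "v \<in> I" and Fd: "v \<in> Fd d"
    and hw: "hw_vector d (wt2 a b) v" and ab: "b \<le> a" "b = 0 \<or> 2 \<le> d"
  shows "(0, Dp ^ a) \<in> I"
proof -
  have V: "closedV (TP I)" by (rule closedV_TP[OF TI])
  have endoI: "linsub E v \<in> I" for E :: "nat \<Rightarrow> (nat \<Rightarrow>\<^sub>0 'k)"
  proof -
    have "linsub E ` I \<subseteq> I" using TI linsub_endo[of E] by (simp add: is_T_ideal_def)
    then show ?thesis using vI by blast
  qed
  have id: "\<forall>x\<in>bic_carrier. \<forall>y\<in>I. bic_mul x y \<in> I \<and> bic_mul y x \<in> I"
    using TI by (simp add: is_T_ideal_def)
  from weights[OF hw Fd ab] show ?thesis
  proof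
    assume A: "fst v = 0 \<and> snd v \<noteq> 0 \<and> (\<forall>m\<in>ks (snd v). (\<forall>u\<in>ks m. idx u = 1 \<or> idx u = 2) \<and> wdeg 1 m = a \<and> wdeg 2 m = b)"
    define P where "P = snd v"
    have v: "v = (0, P)" using A by (simp add: P_def prod_eq_iff)
    have Pnz: "P \<noteq> 0" and shape: "\<forall>m\<in>ks P. (\<forall>u\<in>ks m. idx u = 1 \<or> idx u = 2) \<and> wdeg 1 m = a \<and> wdeg 2 m = b"
      using A by (auto simp: P_def)
    have varsP: "vars P \<subseteq> {Yv 1, Zv 1, Yv 2, Zv 2}"
      using shape by (intro vars_sub) (auto simp: idx_eq_iff)
    have unip: "\<forall>s. ev (pvar(Yv 2 := yy 2 + pconst s * yy 1, Zv 2 := zz 2 + pconst s * zz 1)) P = P"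
      if bpos: "0 < b"
    proof
      fix s :: 'k
      have d2: "2 \<le> d" using ab bpos by auto
      define u :: "nat \<Rightarrow> nat \<Rightarrow> 'k" where "u = (\<lambda>i j. if i = j then (1::'k) else if i = 1 \<and> j = 2 then s else 0)"
      have unipc: "\<forall>u h. (\<forall>i\<in>{1..d}. u i i = 1) \<and> (\<forall>i\<in>{1..d}. \<forall>j\<in>{1..d}. j < i \<longrightarrow> u i j = 0)
        \<and> gl_acts d u h \<longrightarrow> h v = v" using hw unfolding hw_vector_def by blast
      have c1: "\<forall>i\<in>{1..d}. u i i = 1" by (simp add: u_def)
      have c2: "\<forall>i\<in>{1..d}. \<forall>j\<in>{1..d}. j < i \<longrightarrow> u i j = 0" by (auto simp: u_def)
      have "linsub (Egl d u) v = v"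
        using unipc c1 c2 gl_acts_Egl[of d u] by blast
      then have fixP: "ev (\<sigma>E (Egl d u)) P = P" using v by (simp add: linsub_def)
      have in1: "1 \<in> {1..d}" and in2: "2 \<in> {1..d}" using d2 by auto
      have sY1: "\<sigma>E (Egl d u) (Yv 1) = yy 1"
      proof -
        have "\<sigma>E (Egl d u) (Yv 1) = (\<Sum>i\<in>{1..d}. pconst (u i 1) * yy i)"
          using in1 by (simp only: \<sigma>E_simps linY_Egl_in)
        also have "\<dots> = (\<Sum>i\<in>{1..d}. pconst (if i = 1 then (\<lambda>_. 1) i else 0) * yy i)"
          by (intro sum.cong refl) (auto simp: u_def)
        also have "\<dots> = yy 1" using in1 by (simp only: sum_delta_pconst finite_atLeastAtMost) simp
        finally show ?thesis .
      qed
      have sZ1: "\<sigma>E (Egl d u) (Zv 1) = zz 1"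
      proof -
        have "\<sigma>E (Egl d u) (Zv 1) = (\<Sum>i\<in>{1..d}. pconst (u i 1) * zz i)"
          using in1 by (simp only: \<sigma>E_simps linZ_Egl_in)
        also have "\<dots> = (\<Sum>i\<in>{1..d}. pconst (if i = 1 then (\<lambda>_. 1) i else 0) * zz i)"
          by (intro sum.cong refl) (auto simp: u_def)
        also have "\<dots> = zz 1" using in1 by (simp only: sum_delta_pconst finite_atLeastAtMost) simp
        finally show ?thesis .
      qed
      have sY2: "\<sigma>E (Egl d u) (Yv 2) = yy 2 + pconst s * yy 1"
      proof -
        have "\<sigma>E (Egl d u) (Yv 2) = (\<Sum>i\<in>{1..d}. pconst (u i 2) * yy i)"
          using in2 by (simp only: \<sigma>E_simps linY_Egl_in)
        also have "\<dots> = (\<Sum>i\<in>{1..d}. pconst (if i = 2 then 1 else if i = 1 then s else 0) * yy i)"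
          by (intro sum.cong refl) (auto simp: u_def)
        also have "\<dots> = pconst 1 * yy 2 + pconst s * yy 1"
          using in1 in2 by (intro sum_two_pconst) auto
        finally show ?thesis by simp
      qed
      have sZ2: "\<sigma>E (Egl d u) (Zv 2) = zz 2 + pconst s * zz 1"
      proof -
        have "\<sigma>E (Egl d u) (Zv 2) = (\<Sum>i\<in>{1..d}. pconst (u i 2) * zz i)"
          using in2 by (simp only: \<sigma>E_simps linZ_Egl_in)
        also have "\<dots> = (\<Sum>i\<in>{1..d}. pconst (if i = 2 then 1 else if i = 1 then s else 0) * zz i)"
          by (intro sum.cong refl) (auto simp: u_def)
        also have "\<dots> = pconst 1 * zz 2 + pconst s * zz 1"
          using in1 in2 by (intro sum_two_pconst) auto
        finally show ?thesis by simp
      qed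
      have "ev (pvar(Yv 2 := yy 2 + pconst s * yy 1, Zv 2 := zz 2 + pconst s * zz 1)) P = ev (\<sigma>E (Egl d u)) P"
      proof (rule ev_cong_on[OF varsP])
        fix w :: var assume "w \<in> {Yv 1, Zv 1, Yv 2, Zv 2}"
        then show "(pvar(Yv 2 := yy 2 + pconst s * yy 1, Zv 2 := zz 2 + pconst s * zz 1)) w = \<sigma>E (Egl d u) w"
          by (elim insertE emptyE) (simp_all only: sY1 sZ1 sY2 sZ2, simp_all)
      qed
      then show "ev (pvar(Yv 2 := yy 2 + pconst s * yy 1, Zv 2 := zz 2 + pconst s * zz 1)) P = P"
        using fixP by simp
    qed
    obtain p where Pp: "P = Dp ^ b * p" using exact_form[OF shape] unip by blast
    have pnz: "p \<noteq> 0" using Pnz Pp by auto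
    have pp: "\<forall>m\<in>ks p. (\<forall>u\<in>ks m. idx u = 1) \<and> wdeg 1 m = a - b"
      by (rule p_props[OF shape Pp ab(1)])
    have varsp: "vars p \<subseteq> {Yv 1, Zv 1}"
      using pp by (intro vars_sub) (auto simp: idx_eq_iff)
    have "Dp ^ (b + (a - b)) \<in> TP I"
    proof (rule endgame[OF V pnz pp])
      fix s1 s2 :: 'k assume s1: "s1 \<noteq> 0" and s2: "s2 \<noteq> 0"
      define E :: "nat \<Rightarrow> (nat \<Rightarrow>\<^sub>0 'k)" where "E = (\<lambda>j. if j = 1 then sng 1 s1 + sng 2 s2 else sng j (1::'k))"
      have "linsub E v \<in> I" by (rule endoI)
      then have inI: "ev (\<sigma>E E) P \<in> TP I" using v by (simp add: linsub_def TP_def)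
      have sY: "\<sigma>E E (Yv j) = (if j = 1 then pconst s1 * yy 1 + pconst s2 * yy 2 else yy j)" for j
        by (simp add: E_def linY_add linY_single)
      have sZ: "\<sigma>E E (Zv j) = (if j = 1 then pconst s1 * zz 1 + pconst s2 * zz 2 else zz j)" for j
        by (simp add: E_def linZ_add linZ_single)
      have eD: "ev (\<sigma>E E) Dp = pconst s1 * Dp"
      proof -
        have "ev (\<sigma>E E) Dp = \<sigma>E E (Yv 1) * \<sigma>E E (Zv 2) - \<sigma>E E (Yv 2) * \<sigma>E E (Zv 1)"
          by (simp only: ev_diff ev_mult ev_pvar)
        also have "\<dots> = (pconst s1 * yy 1 + pconst s2 * yy 2) * zz 2 - yy 2 * (pconst s1 * zz 1 + pconst s2 * zz 2)"
          unfolding sY sZ by simp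
        also have "\<dots> = pconst s1 * Dp" by (simp add: algebra_simps)
        finally show ?thesis .
      qed
      have ep: "ev (\<sigma>E E) p = ev (pvar(Yv 1 := pconst s1 * yy 1 + pconst s2 * yy 2, Zv 1 := pconst s1 * zz 1 + pconst s2 * zz 2)) p"
      proof (rule ev_cong_on[OF varsp])
        fix w :: var assume "w \<in> {Yv 1, Zv 1}"
        then show "\<sigma>E E w = (pvar(Yv 1 := pconst s1 * yy 1 + pconst s2 * yy 2, Zv 1 := pconst s1 * zz 1 + pconst s2 * zz 2)) w"
          by (elim insertE emptyE) (simp_all only: sY sZ, simp_all)
      qed
      have "ev (\<sigma>E E) P = pconst (s1 ^ b) * (Dp ^ b * ev (pvar(Yv 1 := pconst s1 * yy 1 + pconst s2 * yy 2, Zv 1 := pconst s1 * zz 1 + pconst s2 * zz 2)) p)"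
        unfolding Pp ev_mult ev_power eD ep by (simp add: power_mult_distrib pconst_power mult.assoc)
      then have "pconst (1 / s1 ^ b) * ev (\<sigma>E E) P = Dp ^ b * ev (pvar(Yv 1 := pconst s1 * yy 1 + pconst s2 * yy 2, Zv 1 := pconst s1 * zz 1 + pconst s2 * zz 2)) p"
        using s1 by (simp add: mult.assoc[symmetric] pconst_mult[symmetric])
      moreover have "pconst (1 / s1 ^ b) * ev (\<sigma>E E) P \<in> TP I" by (rule closedV_mult[OF V inI])
      ultimately show "Dp ^ b * ev (pvar(Yv 1 := pconst s1 * yy 1 + pconst s2 * yy 2, Zv 1 := pconst s1 * zz 1 + pconst s2 * zz 2)) p \<in> TP I"
        by simp
    qed
    then show ?thesis using ab(1) by (simp add: TP_def)
  next
    assume B: "a = 1 \<and> b = 0 \<and> snd v = 0 \<and> (\<exists>j\<in>{1..d}. lk (fst v) j \<noteq> 0)"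
    define l where "l = fst v"
    have v: "v = (l, 0)" using B by (simp add: l_def prod_eq_iff)
    obtain j where lj: "lk l j \<noteq> 0" using B l_def by blast
    define E :: "nat \<Rightarrow> (nat \<Rightarrow>\<^sub>0 'k)" where "E = (\<lambda>i. if i = j then sng 1 (1 / lk l j) else (0 :: nat \<Rightarrow>\<^sub>0 'k))"
    have "lmap E l = sng 1 1"
    proof (rule poly_mapping_eqI)
      fix i
      have "lk (lmap E l) i = (\<Sum>j'\<in>ks l. if j' = j then lk l j * lk (sng 1 (1 / lk l j)) i else 0)"
        unfolding lookup_lmap by (intro sum.cong refl) (auto simp: E_def)
      also have "\<dots> = lk l j * lk (sng 1 (1 / lk l j)) i" using lj by (simp add: in_keys_iff)
      also have "\<dots> = lk (sng 1 1) i" using lj by (simp add: lookup_single when_def)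
      finally show "lk (lmap E l) i = lk (sng 1 1) i" .
    qed
    then have "linsub E v = bic_x 1" using v by (simp add: linsub_def bic_x_def)
    then have x1: "bic_x 1 \<in> I" using endoI[of E] by simp
    have "bic_mul (bic_x 1) (bic_x 2) \<in> I" using id carrier_x x1 by blast
    then have t1: "yy 1 * zz 2 \<in> TP I" by (simp add: bic_mul_def bic_x_def linY_single linZ_single TP_def)
    have "bic_mul (bic_x 2) (bic_x 1) \<in> I" using id carrier_x x1 by blast
    then have t2: "yy 2 * zz 1 \<in> TP I" by (simp add: bic_mul_def bic_x_def linY_single linZ_single TP_def)
    have "Dp \<in> TP I" by (rule closedV_diff[OF V t1 t2])
    then show ?thesis using B by (simp add: TP_def)
  qed
qed


theorem lemma4p2:
  fixes f :: "'k::field_char_0 bic" and M :: "'k bic set" and d l1 l2 :: nat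
  assumes "l2 \<le> l1"
    and "l2 = 0 \<or> 2 \<le> d"
    and "iso_W d M l1 l2"
    and "f \<in> M" and "f \<noteq> bic_zero"
  shows "(\<forall>m1 m2 j. m2 \<le> m1 \<and> l1 \<le> m2 \<and> j \<le> m1 - m2 \<longrightarrow> wmu m1 m2 j \<in> T_ideal_gen f)
         \<and> (0, (yy 1 * zz 2 - yy 2 * zz 1) ^ l1) \<in> T_ideal_gen f"
proof -
  obtain v where vM: "v \<in> M" and hw: "hw_vector d (wt2 l1 l2) v" using assms(3) by (auto simp: iso_W_def)
  have irr: "irreducible_GL d M" using assms(3) by (simp add: iso_W_def)
  have vFd: "v \<in> Fd d" using irr vM by (auto simp: irreducible_GL_def is_GL_submodule_def)
  have key: "(0, Dp ^ l1) \<in> I \<and> (\<forall>m1 m2 j. m2 \<le> m1 \<and> l1 \<le> m2 \<and> j \<le> m1 - m2 \<longrightarrow> wmu m1 m2 j \<in> I)"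
    if TI: "is_T_ideal I" and fI: "f \<in> I" for I
  proof -
    have vI: "v \<in> I" by (rule ideal_contains_v[OF irr assms(4) assms(5) TI fI vM])
    have D: "(0, Dp ^ l1) \<in> I" by (rule main_I[OF TI vI vFd hw assms(1) assms(2)])
    have V: "closedV (TP I)" by (rule closedV_TP[OF TI])
    have "wmu m1 m2 j \<in> I" if c: "m2 \<le> m1 \<and> l1 \<le> m2 \<and> j \<le> m1 - m2" for m1 m2 j
    proof -
      have p: "Dp ^ m2 = Dp ^ (m2 - l1) * (Dp :: 'k pol) ^ l1" using c by (simp add: power_add[symmetric])
      have eq: "yy 1 ^ j * Dp ^ m2 * zz 1 ^ (m1 - m2 - j) = (yy 1 ^ j * Dp ^ (m2 - l1) * zz 1 ^ (m1 - m2 - j)) * (Dp :: 'k pol) ^ l1"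
        unfolding p by (simp only: mult_ac)
      have mem: "(yy 1 ^ j * Dp ^ (m2 - l1) * zz 1 ^ (m1 - m2 - j)) * (Dp :: 'k pol) ^ l1 \<in> TP I"
        using D by (intro closedV_mult[OF V]) (simp add: TP_def)
      have W: "wmu m1 m2 j = (0, yy 1 ^ j * Dp ^ m2 * zz 1 ^ (m1 - m2 - j))" by (simp only: wmu_def)
      show ?thesis unfolding W eq using mem by (simp only: TP_def mem_Collect_eq)
    qed
    then show ?thesis using D by blast
  qed
  show ?thesis using key by (auto simp: T_ideal_gen_def)
qed


end
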